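(* Let $A\in\mathbb{R}^{m\times n}$ have rank $r$. (1) Consider the linear program in the variables $H^+,H^-\in\mathbb{R}^{n\times m}$: minimize $\sum_{i,j}(H^+_{ij}+H^-_{ij})$ subject to $AHA=A$, $(AH)^\top=AH$, $H^+\ge 0$, $H^-\ge0$, where $H:=H^+-H^-$. For every extreme point $(H^+,H^-)$ of its feasible region, $H=H^+-H^-$ has at most $mr$ nonzero entries. Moreover this bound is sharp for all $m\ge n\ge r\ge 1$: for such $m,n,r$ there is an $m\times n$ matrix $A$ of rank $r$ for which some extreme solution $H$ has exactly $mr$ nonzero entries. (2) Consider the linear program in the variables $H^+,H^-\in\mathbb{R}^{n\times m}$: minimize $\sum_{i,j}(H^+_{ij}+H^-_{ij})$ subject to $AHA=A$, $(AH)^\top=AH$, $HAA^+=H$, $H^+\ge 0$, $H^-\ge0$, where $H:=H^+-H^-$ and $A^+$ is the Moore–Penrose pseudoinverse of $A$ (this is the linear program for minimizing $\|H\|_1$ subject to $AHA=A$, $HAH=H$, $(AH)^\top=AH$, since under the first and third conditions $HAH=H$ is equivalent to $HAA^+=H$). For every extreme point $(H^+,H^-)$ of its feasible region, $H=H^+-H^-$ has at most $mr+(m-r)(n-r)$ nonzero entries.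
   Context: $\|H\|_1=\sum_{i,j}|H_{ij}|$; inequalities $H^{\pm}\ge0$ are entrywise. $A^+$ denotes the Moore–Penrose pseudoinverse of $A$. *)

theory Defs
  imports "Jordan_Normal_Form.DL_Rank"
begin

definition mrank :: "real mat \<Rightarrow> nat" where
  "mrank A = vec_space.rank (dim_row A) A"

definition pinv :: "real mat \<Rightarrow> real mat" where
  "pinv A = (THE X. X \<in> carrier_mat (dim_col A) (dim_row A) \<and>
      A * X * A = A \<and> X * A * X = X \<and>
      transpose_mat (A * X) = A * X \<and> transpose_mat (X * A) = X * A)"

definition nnz :: "real mat \<Rightarrow> nat" where
  "nnz H = card {(i, j). i < dim_row H \<and> j < dim_col H \<and> H $$ (i, j) \<noteq> 0}"

definition nonneg_mat :: "real mat \<Rightarrow> bool" where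
  "nonneg_mat H \<longleftrightarrow> (\<forall>i < dim_row H. \<forall>j < dim_col H. H $$ (i, j) \<ge> 0)"

definition feasible1 :: "real mat \<Rightarrow> (real mat \<times> real mat) set" where
  "feasible1 A = {(Hp, Hm). Hp \<in> carrier_mat (dim_col A) (dim_row A) \<and>
      Hm \<in> carrier_mat (dim_col A) (dim_row A) \<and>
      A * (Hp - Hm) * A = A \<and>
      transpose_mat (A * (Hp - Hm)) = A * (Hp - Hm) \<and>
      nonneg_mat Hp \<and> nonneg_mat Hm}"

definition feasible2 :: "real mat \<Rightarrow> (real mat \<times> real mat) set" where
  "feasible2 A = {(Hp, Hm). (Hp, Hm) \<in> feasible1 A \<and>
      (Hp - Hm) * A * pinv A = Hp - Hm}"

definition extreme_pt :: "(real mat \<times> real mat) set \<Rightarrow> real mat \<times> real mat \<Rightarrow> bool" where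
  "extreme_pt S x \<longleftrightarrow> x \<in> S \<and>
     (\<forall>y\<in>S. \<forall>z\<in>S. \<forall>t::real. 0 < t \<and> t < 1 \<and>
        fst x = t \<cdot>\<^sub>m fst y + (1 - t) \<cdot>\<^sub>m fst z \<and>
        snd x = t \<cdot>\<^sub>m snd y + (1 - t) \<cdot>\<^sub>m snd z \<longrightarrow> y = z)"

end

theory Submission
  imports Defs
begin


lemma hs:
  fixes a :: "'x \<Rightarrow> 'j \<Rightarrow> real"
  assumes "finite T" "finite J" "card T < card J"
  shows "\<exists>c. (\<exists>j\<in>J. c j \<noteq> 0) \<and> (\<forall>x\<in>T. (\<Sum>j\<in>J. a x j * c j) = 0)"
  using assms
proof (induction T arbitrary: J a rule: finite_induct)
  case empty
  then obtain j0 where "j0 \<in> J" by fastforce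
  then show ?case by (intro exI[of _ "\<lambda>_. 1"]) auto
next
  case (insert x T)
  show ?case
  proof (cases "\<forall>j\<in>J. a x j = 0")
    case True
    have "card T < card J" using insert by simp
    then obtain c where c: "\<exists>j\<in>J. c j \<noteq> 0" "\<forall>y\<in>T. (\<Sum>j\<in>J. a y j * c j) = 0"
      using insert.IH[OF insert.prems(1)] by blast
    show ?thesis using c True by (intro exI[of _ c]) auto
  next
    case False
    then obtain j0 where j0: "j0 \<in> J" "a x j0 \<noteq> 0" by blast
    define J' where "J' = J - {j0}"
    define a' where "a' = (\<lambda>y j. a y j - a y j0 * a x j / a x j0)"
    have fJ': "finite J'" using insert J'_def by simp
    have cJ': "card T < card J'" using insert j0 J'_def by simp
    obtain c' where c': "\<exists>j\<in>J'. c' j \<noteq> 0" "\<forall>y\<in>T. (\<Sum>j\<in>J'. a' y j * c' j) = 0"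
      using insert.IH[OF fJ' cJ'] by blast
    define c where "c = (\<lambda>j. if j = j0 then - (\<Sum>k\<in>J'. a x k * c' k) / a x j0 else c' j)"
    have Jeq: "J = insert j0 J'" using j0 J'_def by auto
    have j0J': "j0 \<notin> J'" using J'_def by auto
    have split: "(\<Sum>j\<in>J. a y j * c j) = a y j0 * c j0 + (\<Sum>j\<in>J'. a y j * c' j)" for y
    proof -
      have "(\<Sum>j\<in>J. a y j * c j) = a y j0 * c j0 + (\<Sum>j\<in>J'. a y j * c j)"
        unfolding Jeq using fJ' j0J' by simp
      also have "(\<Sum>j\<in>J'. a y j * c j) = (\<Sum>j\<in>J'. a y j * c' j)"
        by (rule sum.cong) (auto simp: c_def j0J')
      finally show ?thesis .
    qed
    show ?thesis
    proof (intro exI[of _ c] conjI ballI)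
      show "\<exists>j\<in>J. c j \<noteq> 0" using c'(1) j0J' Jeq by (force simp: c_def)
      fix y assume y: "y \<in> insert x T"
      show "(\<Sum>j\<in>J. a y j * c j) = 0"
      proof (cases "y = x")
        case True
        then show ?thesis using split[of x] j0 by (simp add: c_def)
      next
        case False
        then have yT: "y \<in> T" using y by simp
        have "(\<Sum>j\<in>J'. a' y j * c' j) = (\<Sum>j\<in>J'. a y j * c' j) - a y j0 / a x j0 * (\<Sum>j\<in>J'. a x j * c' j)"
          unfolding a'_def by (simp add: sum_subtractf sum_distrib_left algebra_simps)
        then show ?thesis using split[of y] c'(2) yT j0 by (simp add: c_def)
      qed
    qed
  qed
qed




lemma A_mult_pert:
  fixes A H D :: "real mat"
  assumes "A \<in> carrier_mat m n" "H \<in> carrier_mat n m" "D \<in> carrier_mat n m" "A * D = 0\<^sub>m m m"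
  shows "A * (H + e \<cdot>\<^sub>m D) = A * H"
proof -
  have "A * (H + e \<cdot>\<^sub>m D) = A * H + A * (e \<cdot>\<^sub>m D)"
    using assms by (intro mult_add_distrib_mat) auto
  also have "A * (e \<cdot>\<^sub>m D) = e \<cdot>\<^sub>m (A * D)" using assms by (intro mult_smult_distrib) auto
  also have "A * H + e \<cdot>\<^sub>m (A * D) = A * H" using assms by (intro eq_matI) auto
  finally show ?thesis .
qed

lemma pert:
  fixes A Hp Hm D :: "real mat"
  assumes F: "(Hp,Hm) \<in> feasible1 A" and D: "D \<in> carrier_mat (dim_col A) (dim_row A)"
   and AD: "A * D = 0\<^sub>m (dim_row A) (dim_row A)"
   and nz: "i0 < dim_col A" "j0 < dim_row A" "D $$ (i0,j0) \<noteq> 0"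
   and supp: "\<And>i j. i < dim_col A \<Longrightarrow> j < dim_row A \<Longrightarrow> D $$ (i,j) \<noteq> 0 \<Longrightarrow> Hp $$ (i,j) \<noteq> 0 \<or> Hm $$ (i,j) \<noteq> 0"
  shows "\<exists>e::real. \<exists>y z. y \<in> feasible1 A \<and> z \<in> feasible1 A \<and> y \<noteq> z \<and>
     Hp = (1/2) \<cdot>\<^sub>m fst y + (1 - 1/2) \<cdot>\<^sub>m fst z \<and> Hm = (1/2) \<cdot>\<^sub>m snd y + (1 - 1/2) \<cdot>\<^sub>m snd z \<and>
     fst y - snd y = (Hp - Hm) + e \<cdot>\<^sub>m D \<and> fst z - snd z = (Hp - Hm) + (-e) \<cdot>\<^sub>m D"
proof -
  define n where "n = dim_col A"
  define m where "m = dim_row A"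
  have Ac: "A \<in> carrier_mat m n" unfolding m_def n_def by auto
  have Hp: "Hp \<in> carrier_mat n m" and Hm: "Hm \<in> carrier_mat n m"
    and eq1: "A * (Hp - Hm) * A = A" and eq2: "transpose_mat (A * (Hp - Hm)) = A * (Hp - Hm)"
    and nnp: "nonneg_mat Hp" and nnm: "nonneg_mat Hm"
    using F unfolding feasible1_def n_def m_def by auto
  have Dc: "D \<in> carrier_mat n m" using D unfolding n_def m_def .
  have pos_p: "i < n \<Longrightarrow> j < m \<Longrightarrow> Hp $$ (i,j) \<ge> 0" for i j
    using nnp Hp unfolding nonneg_mat_def by auto
  have pos_m: "i < n \<Longrightarrow> j < m \<Longrightarrow> Hm $$ (i,j) \<ge> 0" for i j
    using nnm Hm unfolding nonneg_mat_def by auto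
  define w where "w = (\<lambda>i j. if Hp $$ (i,j) > 0 then Hp $$ (i,j) else Hm $$ (i,j))"
  define s where "s = (\<Sum>p\<in>{0..<n}\<times>{0..<m}. \<bar>D $$ p\<bar> / w (fst p) (snd p))"
  have wnn: "i < n \<Longrightarrow> j < m \<Longrightarrow> w i j \<ge> 0" for i j using pos_m[of i j] by (auto simp: w_def)
  have s0: "s \<ge> 0" unfolding s_def using wnn by (intro sum_nonneg) auto
  define e where "e = 1 / (1 + s)"
  have e0: "e > 0" using s0 unfolding e_def by auto
  have bound: "e * \<bar>D $$ (i,j)\<bar> \<le> w i j" if ij: "i < n" "j < m" for i j
  proof (cases "D $$ (i,j) = 0")
    case True then show ?thesis using wnn[OF ij] by simp
  next
    case False
    have wpos: "w i j > 0" using supp[of i j] ij False pos_p[OF ij] pos_m[OF ij]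
      unfolding w_def n_def m_def by auto
    have "\<bar>D $$ (i,j)\<bar> / w i j \<le> s" unfolding s_def
      using wnn ij by (intro member_le_sum[of "(i,j)" "{0..<n}\<times>{0..<m}" "\<lambda>p. \<bar>D $$ p\<bar> / w (fst p) (snd p)", simplified]) auto
    then have "\<bar>D $$ (i,j)\<bar> \<le> s * w i j" using wpos by (simp add: divide_le_eq)
    then have "\<bar>D $$ (i,j)\<bar> \<le> (1 + s) * w i j" using wpos by (simp add: algebra_simps)
    then show ?thesis using wpos s0 unfolding e_def by (simp add: divide_le_eq mult.commute)
  qed
  define Dp where "Dp = mat n m (\<lambda>(i,j). if Hp $$ (i,j) > 0 then D $$ (i,j) else 0)"
  define Dm where "Dm = mat n m (\<lambda>(i,j). if Hp $$ (i,j) > 0 then 0 else - D $$ (i,j))"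
  have Dpc: "Dp \<in> carrier_mat n m" and Dmc: "Dm \<in> carrier_mat n m" unfolding Dp_def Dm_def by auto
  define y where "y = (Hp + e \<cdot>\<^sub>m Dp, Hm + e \<cdot>\<^sub>m Dm)"
  define z where "z = (Hp + (-e) \<cdot>\<^sub>m Dp, Hm + (-e) \<cdot>\<^sub>m Dm)"
  have diff: "(Hp + f \<cdot>\<^sub>m Dp) - (Hm + f \<cdot>\<^sub>m Dm) = (Hp - Hm) + f \<cdot>\<^sub>m D" for f
  proof (rule eq_matI)
    fix i j assume "i < dim_row (Hp - Hm + f \<cdot>\<^sub>m D)" "j < dim_col (Hp - Hm + f \<cdot>\<^sub>m D)"
    then have ij: "i < n" "j < m" using Hp Hm Dc by simp_all
    then show "(Hp + f \<cdot>\<^sub>m Dp - (Hm + f \<cdot>\<^sub>m Dm)) $$ (i, j) = (Hp - Hm + f \<cdot>\<^sub>m D) $$ (i, j)"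
      using Hp Hm Dc Dpc Dmc by (simp add: Dp_def Dm_def right_diff_distrib)
  qed (use Hp Hm Dpc Dmc Dc in simp_all)
  have feas: "(Hp + f \<cdot>\<^sub>m Dp, Hm + f \<cdot>\<^sub>m Dm) \<in> feasible1 A" if f: "\<bar>f\<bar> \<le> e" for f
  proof -
    have AH: "A * ((Hp - Hm) + f \<cdot>\<^sub>m D) = A * (Hp - Hm)"
      proof (rule A_mult_pert[OF Ac])
        show "Hp - Hm \<in> carrier_mat n m" using Hp Hm by (simp add: minus_carrier_mat)
        show "D \<in> carrier_mat n m" by (rule Dc)
        show "A * D = 0\<^sub>m m m" using AD unfolding m_def .
      qed
    have np: "nonneg_mat (Hp + f \<cdot>\<^sub>m Dp)" unfolding nonneg_mat_def
    proof (intro allI impI)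
      fix i j assume "i < dim_row (Hp + f \<cdot>\<^sub>m Dp)" "j < dim_col (Hp + f \<cdot>\<^sub>m Dp)"
      then have ij: "i < n" "j < m" using Hp Dpc by auto
      have "\<bar>f\<bar> * \<bar>D $$ (i,j)\<bar> \<le> e * \<bar>D $$ (i,j)\<bar>" using f by (intro mult_right_mono) auto
      then have "\<bar>f * D $$ (i,j)\<bar> \<le> w i j" using bound[OF ij] by (simp add: abs_mult)
      then show "0 \<le> (Hp + f \<cdot>\<^sub>m Dp) $$ (i, j)"
        using ij Hp Dpc pos_p[OF ij] unfolding Dp_def w_def by (simp add: abs_le_iff split: if_splits)
    qed
    have nm: "nonneg_mat (Hm + f \<cdot>\<^sub>m Dm)" unfolding nonneg_mat_def
    proof (intro allI impI)
      fix i j assume "i < dim_row (Hm + f \<cdot>\<^sub>m Dm)" "j < dim_col (Hm + f \<cdot>\<^sub>m Dm)"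
      then have ij: "i < n" "j < m" using Hm Dmc by auto
      have "\<bar>f\<bar> * \<bar>D $$ (i,j)\<bar> \<le> e * \<bar>D $$ (i,j)\<bar>" using f by (intro mult_right_mono) auto
      then have "\<bar>f * D $$ (i,j)\<bar> \<le> w i j" using bound[OF ij] by (simp add: abs_mult)
      then show "0 \<le> (Hm + f \<cdot>\<^sub>m Dm) $$ (i, j)"
        using ij Hm Dmc pos_m[OF ij] pos_p[OF ij] unfolding Dm_def w_def by (simp add: abs_le_iff split: if_splits)
    qed
    have AH2: "A * ((Hp + f \<cdot>\<^sub>m Dp) - (Hm + f \<cdot>\<^sub>m Dm)) = A * (Hp - Hm)"
      unfolding diff[of f] AH ..
    have c1: "Hp + f \<cdot>\<^sub>m Dp \<in> carrier_mat (dim_col A) (dim_row A)"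
      using Hp Dpc unfolding n_def m_def by simp
    have c2: "Hm + f \<cdot>\<^sub>m Dm \<in> carrier_mat (dim_col A) (dim_row A)"
      using Hm Dmc unfolding n_def m_def by simp
    show ?thesis unfolding feasible1_def mem_Collect_eq case_prod_conv AH2
      using c1 c2 np nm eq1 eq2 by blast
  qed
  have yF: "y \<in> feasible1 A" unfolding y_def using feas[of e] e0 by simp
  have zF: "z \<in> feasible1 A" unfolding z_def using feas[of "-e"] e0 by simp
  have i0j0: "i0 < n" "j0 < m" using nz unfolding n_def m_def by auto
  have yz: "y \<noteq> z"
  proof
    assume "y = z"
    then have "fst y $$ (i0,j0) = fst z $$ (i0,j0)" "snd y $$ (i0,j0) = snd z $$ (i0,j0)" by auto
    then have "e * Dp $$ (i0,j0) = - e * Dp $$ (i0,j0)" "e * Dm $$ (i0,j0) = - e * Dm $$ (i0,j0)"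
      using i0j0 Hp Hm Dpc Dmc unfolding y_def z_def by simp_all
    then have "Dp $$ (i0,j0) = 0" "Dm $$ (i0,j0) = 0" using e0 by simp_all
    then show False using i0j0 nz(3) unfolding Dp_def Dm_def by (simp split: if_splits)
  qed
  have c1: "Hp = (1/2) \<cdot>\<^sub>m fst y + (1 - 1/2) \<cdot>\<^sub>m fst z"
    using Hp Dpc unfolding y_def z_def by (intro eq_matI) (simp_all add: field_simps)
  have c2: "Hm = (1/2) \<cdot>\<^sub>m snd y + (1 - 1/2) \<cdot>\<^sub>m snd z"
    using Hm Dmc unfolding y_def z_def by (intro eq_matI) (simp_all add: field_simps)
  have d1: "fst y - snd y = (Hp - Hm) + e \<cdot>\<^sub>m D" unfolding y_def fst_conv snd_conv by (rule diff)
  have d2: "fst z - snd z = (Hp - Hm) + (-e) \<cdot>\<^sub>m D" unfolding z_def fst_conv snd_conv by (rule diff)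
  show ?thesis
    by (intro exI[of _ e] exI[of _ y] exI[of _ z] conjI yF zF yz c1 c2 d1 d2)
qed




lemma RK:
  fixes A :: "real mat"
  assumes A: "A \<in> carrier_mat m n"
  shows "\<exists>P. P \<subseteq> {..<n} \<and> card P = vec_space.rank m A \<and>
     (\<forall>c. (\<forall>i<m. (\<Sum>p\<in>P. c p * A $$ (i,p)) = 0) \<longrightarrow> (\<forall>p\<in>P. c p = 0)) \<and>
     (\<forall>q<n. \<exists>co. \<forall>i<m. A $$ (i,q) = (\<Sum>p\<in>P. co p * A $$ (i,p)))"
proof -
  interpret vec_space "TYPE(real)" m .
  have colsC: "set (cols A) \<subseteq> carrier_vec m" using A cols_dim by blast
  obtain U where U: "maximal U (\<lambda>T. T \<subseteq> set (cols A) \<and> lin_indpt T)"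
    using maximal_exists[of "(\<lambda>T. T \<subseteq> set (cols A) \<and> lin_indpt T)" "card (set (cols A))" "{}"]
    by (meson List.finite_set card_mono empty_iff empty_subsetI finite_lin_indpt2 rev_finite_subset)
  have rank: "rank A = card U" by (rule rank_card_indpt[OF A U])
  have Usub: "U \<subseteq> set (cols A)" and Uind: "lin_indpt U" using U unfolding maximal_def by auto
  have finU: "finite U" using Usub finite_subset by blast
  have UC: "U \<subseteq> carrier_vec m" using Usub colsC by blast
  have colin: "\<exists>p<n. u = col A p" if "u \<in> set (cols A)" for u
    using that A by (auto simp: in_set_conv_nth cols_length)
  define g where "g u = (SOME p. p < n \<and> u = col A p)" for u
  have g: "g u < n \<and> u = col A (g u)" if "u \<in> U" for u
    using someI_ex[OF colin] that Usub unfolding g_def by blast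
  have ginj: "inj_on g U" by (metis g inj_onI)
  define P where "P = g ` U"
  have Psub: "P \<subseteq> {..<n}" using g unfolding P_def by auto
  have cardP: "card P = card U" unfolding P_def using card_image[OF ginj] .
  have colent: "col A p $ i = A $$ (i,p)" if "p < n" "i < m" for p i
    using that A by simp
  have reidx: "(\<Sum>u\<in>U. f (g u) * u $ i) = (\<Sum>p\<in>P. f p * A $$ (i,p))" if "i < m" for f i
  proof -
    have "(\<Sum>p\<in>P. f p * A $$ (i,p)) = (\<Sum>u\<in>U. f (g u) * A $$ (i, g u))"
      unfolding P_def by (rule sum.reindex[OF ginj, unfolded comp_def])
    also have "\<dots> = (\<Sum>u\<in>U. f (g u) * u $ i)"
      by (rule sum.cong[OF refl]) (metis g colent that)
    finally show ?thesis by simp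
  qed
  have indep: "\<forall>p\<in>P. c p = 0" if c: "\<forall>i<m. (\<Sum>p\<in>P. c p * A $$ (i,p)) = 0" for c
  proof (rule ccontr)
    assume "\<not> (\<forall>p\<in>P. c p = 0)"
    then obtain u where u: "u \<in> U" "c (g u) \<noteq> 0" unfolding P_def by auto
    have lc: "lincomb (\<lambda>u. c (g u)) U = 0\<^sub>v m"
    proof (rule eq_vecI)
      show "dim_vec (lincomb (\<lambda>u. c (g u)) U) = dim_vec (0\<^sub>v m)"
        using lincomb_dim[OF finU UC] by simp
      fix i assume "i < dim_vec (0\<^sub>v m)"
      then have i: "i < m" by simp
      show "lincomb (\<lambda>u. c (g u)) U $ i = 0\<^sub>v m $ i"
        using lincomb_index[OF i UC] reidx[OF i, of c] c i by simp
    qed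
    have "lin_dep U"
      by (rule lin_dep_crit[OF finU subset_refl _ u(1) _ ]) (use u(2) lc in auto)
    then show False using Uind by simp
  qed
  have span: "\<exists>co. \<forall>i<m. A $$ (i,q) = (\<Sum>p\<in>P. co p * A $$ (i,p))" if q: "q < n" for q
  proof -
    define v where "v = col A q"
    have vC: "v \<in> carrier_vec m" using A q unfolding v_def by simp
    have vcols: "v \<in> set (cols A)" using A q unfolding v_def by (auto simp: in_set_conv_nth cols_length)
    have vspan: "v \<in> span U"
    proof (cases "v \<in> U")
      case True then show ?thesis using in_own_span[OF UC] by blast
    next
      case False
      show ?thesis
      proof (rule ccontr)
        assume "v \<notin> span U"
        then have "\<not> lin_dep (U \<union> {v})" using lin_dep_iff_in_span[OF UC Uind vC False] by simp
        then have "U \<union> {v} \<subseteq> set (cols A) \<and> lin_indpt (U \<union> {v})" using Usub vcols by simp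
        then have "U \<union> {v} = U" using U unfolding maximal_def by blast
        then show False using False by blast
      qed
    qed
    obtain a B where aB: "v = lincomb a B" "finite B" "B \<subseteq> U" using in_spanE[OF vspan] by blast
    have BC: "B \<subseteq> carrier_vec m" using aB UC by blast
    define co where "co p = (if col A p \<in> B then a (col A p) else 0)" for p
    show ?thesis
    proof (intro exI[of _ co] allI impI)
      fix i assume i: "i < m"
      have "A $$ (i,q) = v $ i" using i q A unfolding v_def by simp
      also have "\<dots> = (\<Sum>x\<in>B. a x * x $ i)" unfolding aB(1) by (rule lincomb_index[OF i BC])
      also have "\<dots> = (\<Sum>u\<in>U. (if u \<in> B then a u else 0) * u $ i)"
        using aB(3) finU by (intro sum.mono_neutral_cong_left) auto
      also have "\<dots> = (\<Sum>u\<in>U. co (g u) * u $ i)"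
        by (rule sum.cong[OF refl]) (metis g co_def)
      also have "\<dots> = (\<Sum>p\<in>P. co p * A $$ (i,p))" by (rule reidx[OF i])
      finally show "A $$ (i,q) = (\<Sum>p\<in>P. co p * A $$ (i,p))" .
    qed
  qed
  show ?thesis
    by (intro exI[of _ P] conjI Psub allI impI) (use cardP rank indep span in auto)
qed




definition lcomb_mat :: "('j \<Rightarrow> real) \<Rightarrow> ('j \<Rightarrow> real mat) \<Rightarrow> 'j set \<Rightarrow> nat \<Rightarrow> nat \<Rightarrow> real mat" where
  "lcomb_mat c M J n m = mat n m (\<lambda>(i,l). \<Sum>j\<in>J. c j * M j $$ (i,l))"

lemma lcomb_carrier[simp]: "lcomb_mat c M J n m \<in> carrier_mat n m"
  unfolding lcomb_mat_def by simp

lemma lcomb_dim[simp]: "dim_row (lcomb_mat c M J n m) = n" "dim_col (lcomb_mat c M J n m) = m"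
  unfolding lcomb_mat_def by simp_all

lemma lcomb_index[simp]: "i < n \<Longrightarrow> l < m \<Longrightarrow> lcomb_mat c M J n m $$ (i,l) = (\<Sum>j\<in>J. c j * M j $$ (i,l))"
  unfolding lcomb_mat_def by simp

lemma mult_lcomb_left:
  assumes B: "B \<in> carrier_mat p n" and M: "\<And>j. j \<in> J \<Longrightarrow> M j \<in> carrier_mat n m"
  shows "B * lcomb_mat c M J n m = lcomb_mat c (\<lambda>j. B * M j) J p m"
proof (rule eq_matI)
  fix i l assume il: "i < dim_row (lcomb_mat c (\<lambda>j. B * M j) J p m)" "l < dim_col (lcomb_mat c (\<lambda>j. B * M j) J p m)"
  then have i: "i < p" and l: "l < m" by auto
  have "(B * lcomb_mat c M J n m) $$ (i,l) = (\<Sum>k<n. B $$ (i,k) * (\<Sum>j\<in>J. c j * M j $$ (k,l)))"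
    using B i l by (simp add: scalar_prod_def lessThan_atLeast0)
  also have "\<dots> = (\<Sum>j\<in>J. c j * (\<Sum>k<n. B $$ (i,k) * M j $$ (k,l)))"
    by (simp add: sum_distrib_left sum_distrib_right mult_ac sum.swap[of _ J])
  also have "\<dots> = (\<Sum>j\<in>J. c j * (B * M j) $$ (i,l))"
  proof (rule sum.cong[OF refl])
    fix j assume "j \<in> J"
    then have "M j \<in> carrier_mat n m" by (rule M)
    then show "c j * (\<Sum>k<n. B $$ (i,k) * M j $$ (k,l)) = c j * (B * M j) $$ (i,l)"
      using B i l by (simp add: scalar_prod_def lessThan_atLeast0)
  qed
  finally show "(B * lcomb_mat c M J n m) $$ (i,l) = lcomb_mat c (\<lambda>j. B * M j) J p m $$ (i,l)"
    using i l by simp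
qed (use B in auto)

lemma mult_lcomb_right:
  assumes B: "B \<in> carrier_mat m q" and M: "\<And>j. j \<in> J \<Longrightarrow> M j \<in> carrier_mat n m"
  shows "lcomb_mat c M J n m * B = lcomb_mat c (\<lambda>j. M j * B) J n q"
proof (rule eq_matI)
  fix i l assume il: "i < dim_row (lcomb_mat c (\<lambda>j. M j * B) J n q)" "l < dim_col (lcomb_mat c (\<lambda>j. M j * B) J n q)"
  then have i: "i < n" and l: "l < q" by auto
  have "(lcomb_mat c M J n m * B) $$ (i,l) = (\<Sum>k<m. (\<Sum>j\<in>J. c j * M j $$ (i,k)) * B $$ (k,l))"
    using B i l by (simp add: scalar_prod_def lessThan_atLeast0)
  also have "\<dots> = (\<Sum>j\<in>J. c j * (\<Sum>k<m. M j $$ (i,k) * B $$ (k,l)))"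
    by (simp add: sum_distrib_left sum_distrib_right mult_ac sum.swap[of _ J])
  also have "\<dots> = (\<Sum>j\<in>J. c j * (M j * B) $$ (i,l))"
  proof (rule sum.cong[OF refl])
    fix j assume "j \<in> J"
    then have "M j \<in> carrier_mat n m" by (rule M)
    then show "c j * (\<Sum>k<m. M j $$ (i,k) * B $$ (k,l)) = c j * (M j * B) $$ (i,l)"
      using B i l by (simp add: scalar_prod_def lessThan_atLeast0)
  qed
  finally show "(lcomb_mat c M J n m * B) $$ (i,l) = lcomb_mat c (\<lambda>j. M j * B) J n q $$ (i,l)"
    using i l by simp
qed (use B in auto)

lemma lcomb_cong:
  assumes "\<And>j. j \<in> J \<Longrightarrow> M j \<in> carrier_mat n m" "\<And>j. j \<in> J \<Longrightarrow> M j = N j"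
  shows "lcomb_mat c M J n m = lcomb_mat c N J n m"
  using assms unfolding lcomb_mat_def by (intro eq_matI) auto

lemma lcomb_zero:
  assumes "\<And>j. j \<in> J \<Longrightarrow> M j = 0\<^sub>m n m"
  shows "lcomb_mat c M J n m = 0\<^sub>m n m"
  using assms unfolding lcomb_mat_def by (intro eq_matI) auto

lemma generic_bound:
  fixes A Hp Hm :: "real mat" and M :: "'j \<Rightarrow> real mat"
  assumes ext: "extreme_pt F (Hp,Hm)" and F1: "F \<subseteq> feasible1 A"
  and finJ: "finite J"
  and Mc: "\<And>j. j \<in> J \<Longrightarrow> M j \<in> carrier_mat (dim_col A) (dim_row A)"
  and AM: "\<And>j. j \<in> J \<Longrightarrow> A * M j = 0\<^sub>m (dim_row A) (dim_row A)"
  and indep: "\<And>c. (\<forall>i<dim_col A. \<forall>l<dim_row A. (\<Sum>j\<in>J. c j * M j $$ (i,l)) = 0) \<Longrightarrow> \<forall>j\<in>J. c j = 0"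
  and Fclosed: "\<And>c y e. y \<in> feasible1 A \<Longrightarrow>
      fst y - snd y = (Hp - Hm) + e \<cdot>\<^sub>m lcomb_mat c M J (dim_col A) (dim_row A) \<Longrightarrow> y \<in> F"
  shows "nnz (Hp - Hm) + card J \<le> dim_col A * dim_row A"
proof (rule ccontr)
  assume contra: "\<not> ?thesis"
  define n where "n = dim_col A"
  define m where "m = dim_row A"
  have Ac: "A \<in> carrier_mat m n" unfolding m_def n_def by auto
  have xF: "(Hp,Hm) \<in> F" using ext unfolding extreme_pt_def by simp
  then have xF1: "(Hp,Hm) \<in> feasible1 A" using F1 by auto
  then have Hp: "Hp \<in> carrier_mat n m" and Hm: "Hm \<in> carrier_mat n m"
    unfolding feasible1_def n_def m_def by auto
  define I where "I = {0..<n} \<times> {0..<m}"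
  define S where "S = {(i,j). i < n \<and> j < m \<and> (Hp $$ (i,j) \<noteq> 0 \<or> Hm $$ (i,j) \<noteq> 0)}"
  have SI: "S \<subseteq> I" unfolding S_def I_def by auto
  have finI: "finite I" unfolding I_def by simp
  have cardI: "card I = n * m" unfolding I_def by simp
  have nnzS: "nnz (Hp - Hm) \<le> card S"
  proof -
    have "{(i, j). i < dim_row (Hp - Hm) \<and> j < dim_col (Hp - Hm) \<and> (Hp - Hm) $$ (i, j) \<noteq> 0} \<subseteq> S"
      using Hp Hm unfolding S_def by auto
    then show ?thesis unfolding nnz_def using finite_subset[OF SI finI] by (rule card_mono[rotated])
  qed
  have cS: "card S \<le> n * m" using card_mono[OF finI SI] cardI by simp
  have "card (I - S) = n * m - card S" using card_Diff_subset[OF finite_subset[OF SI finI] SI] cardI by simp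
  then have cT: "card (I - S) < card J" using contra nnzS cS unfolding n_def m_def by linarith
  obtain c where c: "\<exists>j\<in>J. c j \<noteq> 0" "\<forall>x\<in>I - S. (\<Sum>j\<in>J. M j $$ x * c j) = 0"
    using hs[of "I - S" J "\<lambda>x j. M j $$ x"] finI finJ cT by blast
  define D where "D = lcomb_mat c M J n m"
  have Dc: "D \<in> carrier_mat n m" unfolding D_def by simp
  have AD: "A * D = 0\<^sub>m m m"
  proof -
    have "A * D = lcomb_mat c (\<lambda>j. A * M j) J m m"
      unfolding D_def by (rule mult_lcomb_left[OF Ac]) (use Mc in \<open>auto simp: n_def m_def\<close>)
    also have "\<dots> = 0\<^sub>m m m" by (rule lcomb_zero) (use AM in \<open>auto simp: m_def\<close>)
    finally show ?thesis .
  qed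
  have "\<exists>i<n. \<exists>l<m. D $$ (i,l) \<noteq> 0"
  proof (rule ccontr)
    assume "\<not> ?thesis"
    then have "\<forall>i<n. \<forall>l<m. (\<Sum>j\<in>J. c j * M j $$ (i,l)) = 0" unfolding D_def by auto
    then have "\<forall>j\<in>J. c j = 0" using indep unfolding n_def m_def by blast
    then show False using c(1) by blast
  qed
  then obtain i0 l0 where nz: "i0 < n" "l0 < m" "D $$ (i0,l0) \<noteq> 0" by blast
  have supp: "Hp $$ (i,j) \<noteq> 0 \<or> Hm $$ (i,j) \<noteq> 0" if "i < n" "j < m" "D $$ (i,j) \<noteq> 0" for i j
  proof (rule ccontr)
    assume "\<not> ?thesis"
    then have "(i,j) \<in> I - S" using that unfolding I_def S_def by auto
    then have "(\<Sum>k\<in>J. M k $$ (i,j) * c k) = 0" using c(2) by blast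
    then have "D $$ (i,j) = 0" using that unfolding D_def by (simp add: mult.commute)
    then show False using that by simp
  qed
  obtain e y z where yz: "y \<in> feasible1 A" "z \<in> feasible1 A" "y \<noteq> z"
     "Hp = (1/2) \<cdot>\<^sub>m fst y + (1 - 1/2) \<cdot>\<^sub>m fst z" "Hm = (1/2) \<cdot>\<^sub>m snd y + (1 - 1/2) \<cdot>\<^sub>m snd z"
     "fst y - snd y = (Hp - Hm) + e \<cdot>\<^sub>m D" "fst z - snd z = (Hp - Hm) + (-e) \<cdot>\<^sub>m D"
    using pert[OF xF1, of D i0 l0] Dc AD nz supp unfolding n_def m_def by blast
  have "y \<in> F" "z \<in> F" using Fclosed yz unfolding D_def n_def m_def by blast+
  moreover have "(0::real) < 1/2 \<and> (1/2::real) < 1" by simp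
  ultimately have "y = z" using ext yz(4,5) unfolding extreme_pt_def fst_conv snd_conv by blast
  then show False using yz(3) by simp
qed




lemma kernel_family:
  fixes A :: "real mat" assumes A: "A \<in> carrier_mat m n"
  obtains P w where "P \<subseteq> {..<n}" "card P = vec_space.rank m A"
   "\<And>c. (\<forall>i<m. (\<Sum>p\<in>P. c p * A $$ (i,p)) = 0) \<Longrightarrow> (\<forall>p\<in>P. c p = 0)"
   "\<And>q i. q < n \<Longrightarrow> i < m \<Longrightarrow> (\<Sum>k<n. A $$ (i,k) * w q k) = 0"
   "\<And>d. (\<forall>i<n. (\<Sum>q\<in>{..<n} - P. d q * w q i) = 0) \<Longrightarrow> \<forall>q\<in>{..<n} - P. d q = 0"
proof -
  obtain P where P: "P \<subseteq> {..<n}" "card P = vec_space.rank m A"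
     "\<And>c. (\<forall>i<m. (\<Sum>p\<in>P. c p * A $$ (i,p)) = 0) \<Longrightarrow> (\<forall>p\<in>P. c p = 0)"
     and sp: "\<forall>q<n. \<exists>co. \<forall>i<m. A $$ (i,q) = (\<Sum>p\<in>P. co p * A $$ (i,p))"
    using RK[OF A] by blast
  have "\<forall>q. \<exists>co. q < n \<longrightarrow> (\<forall>i<m. A $$ (i,q) = (\<Sum>p\<in>P. co p * A $$ (i,p)))" using sp by blast
  then obtain CO where CO0: "\<forall>q. q < n \<longrightarrow> (\<forall>i<m. A $$ (i,q) = (\<Sum>p\<in>P. CO q p * A $$ (i,p)))"
    unfolding choice_iff by blast
  have CO: "A $$ (i,q) = (\<Sum>p\<in>P. CO q p * A $$ (i,p))" if "q < n" "i < m" for q i using CO0 that by blast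
  define w where "w q k = (if k = q then 1 else 0) - (if k \<in> P then CO q k else 0)" for q k
  have finP: "finite P" using P(1) finite_subset by blast
  have ker: "(\<Sum>k<n. A $$ (i,k) * w q k) = 0" if q: "q < n" and i: "i < m" for q i
  proof -
    have "(\<Sum>k<n. A $$ (i,k) * w q k) = (\<Sum>k<n. (if k = q then A $$ (i,k) else 0)) - (\<Sum>k<n. (if k \<in> P then CO q k * A $$ (i,k) else 0))"
      unfolding sum_subtractf[symmetric] by (rule sum.cong[OF refl]) (simp add: w_def algebra_simps)
    also have "(\<Sum>k<n. (if k = q then A $$ (i,k) else 0)) = A $$ (i,q)"
      using q by simp
    also have "(\<Sum>k<n. (if k \<in> P then CO q k * A $$ (i,k) else 0)) = (\<Sum>k\<in>{..<n} \<inter> P. CO q k * A $$ (i,k))"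
      by (simp add: sum.inter_restrict)
    also have "{..<n} \<inter> P = P" using P(1) by blast
    finally show ?thesis using CO[OF q i] by simp
  qed
  have ind: "\<forall>q\<in>{..<n} - P. d q = 0" if d: "\<forall>i<n. (\<Sum>q\<in>{..<n} - P. d q * w q i) = 0" for d
  proof
    fix q0 assume q0: "q0 \<in> {..<n} - P"
    have "(\<Sum>q\<in>{..<n} - P. d q * w q q0) = (\<Sum>q\<in>{..<n} - P. (if q = q0 then d q else 0))"
      using q0 by (intro sum.cong[OF refl]) (auto simp: w_def)
    also have "\<dots> = d q0" using q0 by simp
    finally show "d q0 = 0" using d q0 by auto
  qed
  show thesis
  proof (rule that[of P w])
    show "P \<subseteq> {..<n}" "card P = vec_space.rank m A" by (fact P(1), fact P(2))
    show "\<And>c. \<forall>i<m. (\<Sum>p\<in>P. c p * A $$ (i,p)) = 0 \<Longrightarrow> \<forall>p\<in>P. c p = 0" by (rule P(3))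
    show "\<And>q i. q < n \<Longrightarrow> i < m \<Longrightarrow> (\<Sum>k<n. A $$ (i,k) * w q k) = 0" by (rule ker)
    show "\<And>d. \<forall>i<n. (\<Sum>q\<in>{..<n} - P. d q * w q i) = 0 \<Longrightarrow> \<forall>q\<in>{..<n} - P. d q = 0" by (rule ind)
  qed
qed

lemma card_compl: assumes "P \<subseteq> {..<n}" shows "card ({..<n} - P) = n - card P"
  using assms by (simp add: card_Diff_subset finite_subset)

theorem part1:
  fixes A Hp Hm :: "real mat"
  assumes ext: "extreme_pt (feasible1 A) (Hp, Hm)"
  shows "nnz (Hp - Hm) \<le> dim_row A * mrank A"
proof -
  define n where "n = dim_col A"
  define m where "m = dim_row A"
  have Ac: "A \<in> carrier_mat m n" unfolding m_def n_def by auto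
  obtain P w where P: "P \<subseteq> {..<n}" "card P = vec_space.rank m A"
   and "\<And>c. (\<forall>i<m. (\<Sum>p\<in>P. c p * A $$ (i,p)) = 0) \<Longrightarrow> (\<forall>p\<in>P. c p = 0)"
   and kerw: "\<And>q i. q < n \<Longrightarrow> i < m \<Longrightarrow> (\<Sum>k<n. A $$ (i,k) * w q k) = 0"
   and indw: "\<And>d. (\<forall>i<n. (\<Sum>q\<in>{..<n} - P. d q * w q i) = 0) \<Longrightarrow> \<forall>q\<in>{..<n} - P. d q = 0"
    using kernel_family[OF Ac] by blast
  define L where "L = {..<n} - P"
  define J where "J = L \<times> {..<m}"
  define M where "M x = mat n m (\<lambda>(i,l). if l = snd x then w (fst x) i else 0)" for x
  have finJ: "finite J" unfolding J_def L_def by simp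
  have cardJ: "card J = (n - card P) * m" unfolding J_def L_def using card_compl[OF P(1)] by (simp add: card_cartesian_product)
  have Mc: "M x \<in> carrier_mat n m" for x unfolding M_def by simp
  have AM: "A * M x = 0\<^sub>m m m" if "x \<in> J" for x
  proof (rule eq_matI)
    fix i l assume "i < dim_row (0\<^sub>m m m :: real mat)" "l < dim_col (0\<^sub>m m m :: real mat)"
    then have i: "i < m" and l: "l < m" by auto
    have q: "fst x < n" using that unfolding J_def L_def by auto
    have "(A * M x) $$ (i,l) = (\<Sum>k<n. A $$ (i,k) * (if l = snd x then w (fst x) k else 0))"
      using Ac i l by (simp add: M_def scalar_prod_def lessThan_atLeast0)
    also have "\<dots> = (if l = snd x then (\<Sum>k<n. A $$ (i,k) * w (fst x) k) else 0)" by simp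
    also have "\<dots> = 0" using kerw[OF q i] by simp
    finally show "(A * M x) $$ (i,l) = 0\<^sub>m m m $$ (i,l)" using i l by simp
  qed (use Ac in \<open>simp_all add: M_def\<close>)
  have indep: "\<forall>j\<in>J. c j = 0" if c: "\<forall>i<n. \<forall>l<m. (\<Sum>j\<in>J. c j * M j $$ (i,l)) = 0" for c
  proof
    fix x assume x: "x \<in> J"
    obtain q l where xql: "x = (q,l)" "q \<in> L" "l < m" using x unfolding J_def by auto
    have "\<forall>i<n. (\<Sum>q\<in>L. c (q,l) * w q i) = 0"
    proof (intro allI impI)
      fix i assume i: "i < n"
      have "(\<Sum>j\<in>J. c j * M j $$ (i,l)) = (\<Sum>q\<in>L. \<Sum>l'<m. c (q,l') * M (q,l') $$ (i,l))"
        unfolding J_def by (simp add: sum.cartesian_product split_def)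
      also have "\<dots> = (\<Sum>q\<in>L. \<Sum>l'<m. (if l' = l then c (q,l') * w q i else 0))"
        using i xql(3) by (intro sum.cong[OF refl]) (auto simp: M_def)
      also have "\<dots> = (\<Sum>q\<in>L. c (q,l) * w q i)"
        using xql(3) by simp
      finally show "(\<Sum>q\<in>L. c (q,l) * w q i) = 0" using c i xql(3) by simp
    qed
    then show "c x = 0" using indw[of "\<lambda>q. c (q,l)"] xql unfolding L_def by blast
  qed
  have "nnz (Hp - Hm) + card J \<le> dim_col A * dim_row A"
  proof (rule generic_bound[OF ext subset_refl finJ])
    show "\<And>j. j \<in> J \<Longrightarrow> M j \<in> carrier_mat (dim_col A) (dim_row A)" using Mc unfolding n_def m_def by blast
    show "\<And>j. j \<in> J \<Longrightarrow> A * M j = 0\<^sub>m (dim_row A) (dim_row A)" using AM unfolding m_def by blast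
    show "\<And>c. (\<forall>i<dim_col A. \<forall>l<dim_row A. (\<Sum>j\<in>J. c j * M j $$ (i,l)) = 0) \<Longrightarrow> \<forall>j\<in>J. c j = 0"
      using indep unfolding n_def m_def by blast
  qed
  moreover have "card P \<le> n" using card_mono[OF finite_lessThan P(1)] by simp
  ultimately have "nnz (Hp - Hm) + (n - card P) * m \<le> n * m" using cardJ unfolding n_def m_def by simp
  moreover have "n * m = (n - card P) * m + card P * m" using \<open>card P \<le> n\<close>
    by (simp add: add_mult_distrib[symmetric])
  ultimately have "nnz (Hp - Hm) \<le> card P * m" by linarith
  then have "nnz (Hp - Hm) \<le> m * card P" by (simp add: mult.commute)
  then show ?thesis using P(2) unfolding mrank_def m_def by simp
qed




lemma assoc': "dim_col (A::'a::comm_semiring_0 mat) = dim_row B \<Longrightarrow> dim_col B = dim_row C \<Longrightarrow> (A*B)*C = A*(B*C)"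
  by (rule assoc_mult_mat[of A "dim_row A" "dim_col A" B "dim_col B" C "dim_col C"]) auto

lemma tm': "dim_col (A::'a::comm_semiring_0 mat) = dim_row B \<Longrightarrow> transpose_mat (A * B) = transpose_mat B * transpose_mat A"
  by (rule transpose_mult[of A "dim_row A" "dim_col A" B "dim_col B"]) auto

definition penrose :: "real mat \<Rightarrow> real mat \<Rightarrow> bool" where
  "penrose A X \<longleftrightarrow> X \<in> carrier_mat (dim_col A) (dim_row A) \<and>
      A * X * A = A \<and> X * A * X = X \<and>
      transpose_mat (A * X) = A * X \<and> transpose_mat (X * A) = X * A"

lemma penrose_unique:
  assumes X: "penrose A X" and Y: "penrose A Y"
  shows "X = Y"
proof -
  define m where "m = dim_row A"
  define n where "n = dim_col A"
  have Ac: "A \<in> carrier_mat m n" unfolding m_def n_def by auto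
  have Xc: "X \<in> carrier_mat n m" and X1: "A * X * A = A" and X2: "X * A * X = X"
    and X3: "transpose_mat (A * X) = A * X" and X4: "transpose_mat (X * A) = X * A"
    using X unfolding penrose_def m_def n_def by auto
  have Yc: "Y \<in> carrier_mat n m" and Y1: "A * Y * A = A" and Y2: "Y * A * Y = Y"
    and Y3: "transpose_mat (A * Y) = A * Y" and Y4: "transpose_mat (Y * A) = Y * A"
    using Y unfolding penrose_def m_def n_def by auto
  have a: "transpose_mat A = transpose_mat A * (A * Y)"
  proof -
    have "transpose_mat A = transpose_mat (A * Y * A)" using Y1 by simp
    also have "\<dots> = transpose_mat A * transpose_mat (A * Y)" using Ac Yc by (simp add: assoc' tm')
    also have "\<dots> = transpose_mat A * (A * Y)" using Y3 by simp
    finally show ?thesis .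
  qed
  have b: "transpose_mat A = X * (A * transpose_mat A)"
  proof -
    have "transpose_mat A = transpose_mat (A * X * A)" using X1 by simp
    also have "\<dots> = transpose_mat (X * A) * transpose_mat A" using Ac Xc by (simp add: tm')
    also have "\<dots> = X * (A * transpose_mat A)" using X4 Ac Xc by (simp add: assoc')
    finally show ?thesis .
  qed
  have X2': "X * (A * X) = X" using X2 Ac Xc by (simp add: assoc')
  have Y2': "Y * (A * Y) = Y" using Y2 Ac Yc by (simp add: assoc')
  have "X = X * (A * X)" using X2' by simp
  also have "\<dots> = X * transpose_mat (A * X)" using X3 by simp
  also have "\<dots> = X * (transpose_mat X * transpose_mat A)" using Ac Xc by (simp add: tm')
  also have "\<dots> = X * (transpose_mat X * (transpose_mat A * (A * Y)))" using a[symmetric] by simp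
  also have "\<dots> = X * (transpose_mat (A * X) * (A * Y))" using Ac Xc Yc by (simp add: tm' assoc')
  also have "\<dots> = (X * (A * X)) * (A * Y)" using X3 Ac Xc Yc by (simp add: assoc')
  also have "\<dots> = X * (A * Y)" using X2' by simp
  finally have XX: "X = X * (A * Y)" .
  have "Y = Y * (A * Y)" using Y2' by simp
  also have "\<dots> = transpose_mat (Y * A) * Y" using Y4 Ac Yc by (simp add: assoc')
  also have "\<dots> = transpose_mat A * (transpose_mat Y * Y)" using Ac Yc by (simp add: tm' assoc')
  also have "\<dots> = X * (A * transpose_mat A) * (transpose_mat Y * Y)" using b[symmetric] Ac Xc Yc by (simp add: assoc')
  also have "\<dots> = X * (A * (transpose_mat (Y * A) * Y))" using Ac Xc Yc by (simp add: assoc' tm')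
  also have "\<dots> = X * (A * (Y * (A * Y)))" using Y4 Ac Yc by (simp add: assoc')
  also have "\<dots> = X * (A * Y)" using Y2' by simp
  finally show ?thesis using XX by simp
qed

lemma gram_inv:
  fixes B :: "real mat"
  assumes B: "B \<in> carrier_mat m r"
  and inj: "\<And>v. v \<in> carrier_vec r \<Longrightarrow> B *\<^sub>v v = 0\<^sub>v m \<Longrightarrow> v = 0\<^sub>v r"
  shows "\<exists>S. S \<in> carrier_mat r r \<and> S * (transpose_mat B * B) = 1\<^sub>m r \<and> (transpose_mat B * B) * S = 1\<^sub>m r"
proof -
  define G where "G = transpose_mat B * B"
  have G: "G \<in> carrier_mat r r" unfolding G_def using B by simp
  have "det G \<noteq> 0"
  proof
    assume "det G = 0"
    then obtain v where v: "v \<in> carrier_vec r" "v \<noteq> 0\<^sub>v r" "G *\<^sub>v v = 0\<^sub>v r"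
      using det_0_iff_vec_prod_zero_field[OF G] by blast
    define w where "w = B *\<^sub>v v"
    have w: "w \<in> carrier_vec m" unfolding w_def using B v by simp
    have "G *\<^sub>v v = transpose_mat B *\<^sub>v w" unfolding G_def w_def using B v by simp
    then have z: "transpose_mat B *\<^sub>v w = 0\<^sub>v r" using v(3) by simp
    have "(transpose_mat B *\<^sub>v w) \<bullet> v = 0" unfolding z using v(1) by simp
    moreover have "(transpose_mat B *\<^sub>v w) \<bullet> v = w \<bullet> (B *\<^sub>v v)"
      by (rule transpose_vec_mult_scalar[OF B v(1) w])
    ultimately have ww: "w \<bullet> w = 0" unfolding w_def by simp
    have "w = 0\<^sub>v m"
    proof (rule eq_vecI)
      fix i assume i: "i < dim_vec (0\<^sub>v m)"
      have "(\<Sum>k<m. w $ k * w $ k) = 0" using ww w by (simp add: scalar_prod_def lessThan_atLeast0)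
      then have "\<forall>k\<in>{..<m}. w $ k * w $ k = 0" by (subst sum_nonneg_eq_0_iff[symmetric]) auto
      then show "w $ i = 0\<^sub>v m $ i" using i by auto
    qed (use w in simp)
    then have "v = 0\<^sub>v r" using inj[OF v(1)] unfolding w_def by simp
    then show False using v(2) by simp
  qed
  from det_non_zero_imp_unit[OF G this, of undefined]
  obtain S where "S \<in> carrier_mat r r" "S * G = 1\<^sub>m r" "G * S = 1\<^sub>m r"
    unfolding Units_def ring_mat_def by auto
  then show ?thesis unfolding G_def by blast
qed

lemma mp_from_factor:
  fixes B C S1 S2 :: "real mat"
  assumes B: "B \<in> carrier_mat m r" and C: "C \<in> carrier_mat r n" and S1: "S1 \<in> carrier_mat r r" and S2: "S2 \<in> carrier_mat r r"
  and i1: "S1 * (transpose_mat B * B) = 1\<^sub>m r" and i2: "(C * transpose_mat C) * S2 = 1\<^sub>m r"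
  and t1: "transpose_mat S1 = S1" and t2: "transpose_mat S2 = S2"
  shows "penrose (B * C) (transpose_mat C * (S2 * (S1 * transpose_mat B)))"
proof -
  define X where "X = transpose_mat C * (S2 * (S1 * transpose_mat B))"
  have i1': "S1 * (transpose_mat B * (B * Z)) = Z" if "dim_row Z = r" for Z
  proof -
    have "S1 * (transpose_mat B * (B * Z)) = (S1 * (transpose_mat B * B)) * Z"
      using B S1 that by (simp add: assoc')
    also have "\<dots> = Z" using i1 that by simp
    finally show ?thesis .
  qed
  have i2': "C * (transpose_mat C * (S2 * Z)) = Z" if "dim_row Z = r" for Z
  proof -
    have "C * (transpose_mat C * (S2 * Z)) = ((C * transpose_mat C) * S2) * Z"
      using C S2 that by (simp add: assoc')
    also have "\<dots> = Z" using i2 that by simp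
    finally show ?thesis .
  qed
  have Xc: "X \<in> carrier_mat n m" unfolding X_def using B C S1 S2 by simp
  have AX: "(B * C) * X = B * (S1 * transpose_mat B)"
    unfolding X_def using B C S1 S2 by (simp add: assoc' i2')
  have XA: "X * (B * C) = transpose_mat C * (S2 * C)"
    unfolding X_def using B C S1 S2 by (simp add: assoc' i1')
  have 1: "(B * C) * X * (B * C) = B * C"
    unfolding AX using B C S1 S2 by (simp add: assoc' i1')
  have 2: "X * (B * C) * X = X"
    unfolding XA unfolding X_def using B C S1 S2 by (simp add: assoc' i2')
  have 3: "transpose_mat ((B * C) * X) = (B * C) * X"
    unfolding AX using B C S1 S2 t1 by (simp add: assoc' tm')
  have 4: "transpose_mat (X * (B * C)) = X * (B * C)"
    unfolding XA using B C S1 S2 t2 by (simp add: assoc' tm')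
  show ?thesis unfolding penrose_def X_def[symmetric] using Xc 1 2 3 4 B C by simp
qed

lemma inverse_transpose:
  fixes G S :: "real mat"
  assumes G: "G \<in> carrier_mat r r" and S: "S \<in> carrier_mat r r"
  and l: "S * G = 1\<^sub>m r" and rr: "G * S = 1\<^sub>m r" and sym: "transpose_mat G = G"
  shows "transpose_mat S = S"
proof -
  have "transpose_mat S * G = transpose_mat (G * S)" using G S sym by (simp add: tm')
  then have lt: "transpose_mat S * G = 1\<^sub>m r" using rr by simp
  have "transpose_mat S = transpose_mat S * (G * S)" using rr S by simp
  also have "\<dots> = (transpose_mat S * G) * S" using G S by (simp add: assoc')
  also have "\<dots> = S" using lt S by simp
  finally show ?thesis .
qed




lemma full_rank_factor:
  fixes A :: "real mat"
  assumes A: "A \<in> carrier_mat m n"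
  shows "\<exists>r B C. B \<in> carrier_mat m r \<and> C \<in> carrier_mat r n \<and> A = B * C \<and>
     (\<forall>v. v \<in> carrier_vec r \<longrightarrow> B *\<^sub>v v = 0\<^sub>v m \<longrightarrow> v = 0\<^sub>v r) \<and>
     (\<forall>v. v \<in> carrier_vec r \<longrightarrow> transpose_mat C *\<^sub>v v = 0\<^sub>v n \<longrightarrow> v = 0\<^sub>v r)"
proof -
  obtain P where P: "P \<subseteq> {..<n}"
     and indP: "\<And>c. (\<forall>i<m. (\<Sum>p\<in>P. c p * A $$ (i,p)) = 0) \<Longrightarrow> (\<forall>p\<in>P. c p = 0)"
     and sp: "\<forall>q<n. \<exists>co. \<forall>i<m. A $$ (i,q) = (\<Sum>p\<in>P. co p * A $$ (i,p))"
    using RK[OF A] by blast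
  have "\<forall>q. \<exists>co. q < n \<longrightarrow> (\<forall>i<m. A $$ (i,q) = (\<Sum>p\<in>P. co p * A $$ (i,p)))" using sp by blast
  then obtain CO where CO0: "\<forall>q. q < n \<longrightarrow> (\<forall>i<m. A $$ (i,q) = (\<Sum>p\<in>P. CO q p * A $$ (i,p)))"
    unfolding choice_iff by blast
  have CO: "A $$ (i,q) = (\<Sum>p\<in>P. CO q p * A $$ (i,p))" if "q < n" "i < m" for q i using CO0 that by blast
  have finP: "finite P" using P finite_subset by blast
  have COid: "CO q p = (if p = q then 1 else 0)" if q: "q \<in> P" and p: "p \<in> P" for q p
  proof -
    have "\<forall>i<m. (\<Sum>p\<in>P. (CO q p - (if p = q then 1 else 0)) * A $$ (i,p)) = 0"
    proof (intro allI impI)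
      fix i assume i: "i < m"
      have "(\<Sum>p\<in>P. (CO q p - (if p = q then 1 else 0)) * A $$ (i,p))
          = (\<Sum>p\<in>P. CO q p * A $$ (i,p)) - (\<Sum>p\<in>P. (if p = q then A $$ (i,p) else 0))"
        unfolding sum_subtractf[symmetric] by (rule sum.cong[OF refl]) (simp add: algebra_simps)
      also have "\<dots> = 0" using CO[of q i] q i P finP by auto
      finally show "(\<Sum>p\<in>P. (CO q p - (if p = q then 1 else 0)) * A $$ (i,p)) = 0" .
    qed
    then show ?thesis using indP[of "\<lambda>p. CO q p - (if p = q then 1 else 0)"] p by auto
  qed
  define ps where "ps = sorted_list_of_set P"
  define r where "r = length ps"
  have dps: "distinct ps" and sps: "set ps = P" unfolding ps_def using finP by auto
  have bij: "bij_betw ((!) ps) {..<r} P" using bij_betw_nth[OF dps] sps unfolding r_def by simp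
  have psP: "ps ! k \<in> P" if "k < r" for k using that sps unfolding r_def by auto
  have psn: "ps ! k < n" if "k < r" for k using psP[OF that] P by auto
  have reidx: "(\<Sum>k<r. g (ps ! k)) = (\<Sum>p\<in>P. g p)" for g :: "nat \<Rightarrow> real"
    using sum.reindex_bij_betw[OF bij, of g] .
  define B where "B = mat m r (\<lambda>(i,k). A $$ (i, ps ! k))"
  define C where "C = mat r n (\<lambda>(k,q). CO q (ps ! k))"
  have Bc: "B \<in> carrier_mat m r" and Cc: "C \<in> carrier_mat r n" unfolding B_def C_def by auto
  have ABC: "A = B * C"
  proof (rule eq_matI)
    fix i q assume "i < dim_row (B * C)" "q < dim_col (B * C)"
    then have i: "i < m" and q: "q < n" using Bc Cc by auto
    have "(B * C) $$ (i,q) = (\<Sum>k<r. A $$ (i, ps ! k) * CO q (ps ! k))"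
      using i q Bc Cc by (simp add: B_def C_def scalar_prod_def lessThan_atLeast0)
    also have "\<dots> = (\<Sum>p\<in>P. CO q p * A $$ (i,p))" using reidx[of "\<lambda>p. A $$ (i,p) * CO q p"] by (simp add: mult.commute)
    finally show "A $$ (i,q) = (B * C) $$ (i,q)" using CO[OF q i] by simp
  qed (use A Bc Cc in auto)
  have injB: "v = 0\<^sub>v r" if v: "v \<in> carrier_vec r" and Bv: "B *\<^sub>v v = 0\<^sub>v m" for v
  proof -
    define c where "c p = v $ (the_inv_into {..<r} ((!) ps) p)" for p
    have cps: "c (ps ! k) = v $ k" if "k < r" for k
      unfolding c_def using the_inv_into_f_f[OF bij_betw_imp_inj_on[OF bij]] that by simp
    have "\<forall>i<m. (\<Sum>p\<in>P. c p * A $$ (i,p)) = 0"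
    proof (intro allI impI)
      fix i assume i: "i < m"
      have "(\<Sum>p\<in>P. c p * A $$ (i,p)) = (\<Sum>k<r. c (ps ! k) * A $$ (i, ps ! k))" using reidx[of "\<lambda>p. c p * A $$ (i,p)"] by simp
      also have "\<dots> = (\<Sum>k<r. v $ k * A $$ (i, ps ! k))" by (rule sum.cong[OF refl]) (simp add: cps)
      also have "\<dots> = (B *\<^sub>v v) $ i" using i v Bc by (simp add: B_def scalar_prod_def lessThan_atLeast0 mult.commute)
      also have "\<dots> = 0" using Bv i by simp
      finally show "(\<Sum>p\<in>P. c p * A $$ (i,p)) = 0" .
    qed
    then have "\<forall>p\<in>P. c p = 0" by (rule indP)
    then show ?thesis using v cps psP by (intro eq_vecI) auto
  qed
  have injC: "v = 0\<^sub>v r" if v: "v \<in> carrier_vec r" and Cv: "transpose_mat C *\<^sub>v v = 0\<^sub>v n" for v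
  proof (rule eq_vecI)
    fix l assume "l < dim_vec (0\<^sub>v r)"
    then have l: "l < r" by simp
    have "(transpose_mat C *\<^sub>v v) $ (ps ! l) = (\<Sum>k<r. CO (ps ! l) (ps ! k) * v $ k)"
      using psn[OF l] v Cc by (simp add: C_def scalar_prod_def lessThan_atLeast0)
    also have "\<dots> = (\<Sum>k<r. if k = l then v $ k else 0)"
    proof (rule sum.cong[OF refl])
      fix k assume k: "k \<in> {..<r}"
      have "(ps ! k = ps ! l) = (k = l)" using nth_eq_iff_index_eq[OF dps] k l unfolding r_def by auto
      then show "CO (ps ! l) (ps ! k) * v $ k = (if k = l then v $ k else 0)"
        using COid[OF psP[OF l] psP[of k]] k by auto
    qed
    also have "\<dots> = v $ l" using l by simp
    finally show "v $ l = 0\<^sub>v r $ l" using Cv psn[OF l] l by simp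
  qed (use v in simp)
  show ?thesis
    by (intro exI[of _ r] exI[of _ B] exI[of _ C]) (use Bc Cc ABC injB injC in blast)
qed

lemma penrose_exists:
  fixes A :: "real mat"
  shows "\<exists>X. penrose A X"
proof -
  define m where "m = dim_row A"
  define n where "n = dim_col A"
  have A: "A \<in> carrier_mat m n" unfolding m_def n_def by auto
  obtain r B C where B: "B \<in> carrier_mat m r" and C: "C \<in> carrier_mat r n" and ABC: "A = B * C"
    and injB: "\<And>v. v \<in> carrier_vec r \<Longrightarrow> B *\<^sub>v v = 0\<^sub>v m \<Longrightarrow> v = 0\<^sub>v r"
    and injC: "\<And>v. v \<in> carrier_vec r \<Longrightarrow> transpose_mat C *\<^sub>v v = 0\<^sub>v n \<Longrightarrow> v = 0\<^sub>v r"
    using full_rank_factor[OF A] by blast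
  have Ct: "transpose_mat C \<in> carrier_mat n r" using C by simp
  obtain S1 where S1: "S1 \<in> carrier_mat r r" "S1 * (transpose_mat B * B) = 1\<^sub>m r" "(transpose_mat B * B) * S1 = 1\<^sub>m r"
    using gram_inv[OF B injB] by blast
  obtain S2 where S2: "S2 \<in> carrier_mat r r" "S2 * (transpose_mat (transpose_mat C) * transpose_mat C) = 1\<^sub>m r"
      "(transpose_mat (transpose_mat C) * transpose_mat C) * S2 = 1\<^sub>m r"
    using gram_inv[OF Ct injC] by blast
  have t1: "transpose_mat S1 = S1"
    by (rule inverse_transpose[of "transpose_mat B * B" r]) (use B S1 in \<open>simp_all add: tm'\<close>)
  have t2: "transpose_mat S2 = S2"
    by (rule inverse_transpose[of "C * transpose_mat C" r]) (use C S2 in \<open>simp_all add: tm'\<close>)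
  have "penrose (B * C) (transpose_mat C * (S2 * (S1 * transpose_mat B)))"
    by (rule mp_from_factor[OF B C S1(1) S2(1) S1(2) _ t1 t2]) (use S2 in simp)
  then show ?thesis unfolding ABC by blast
qed

lemma pinv_penrose: "penrose A (pinv A)"
proof -
  have "\<exists>!X. penrose A X" using penrose_exists penrose_unique by blast
  then have "penrose A (THE X. penrose A X)" by (rule theI')
  moreover have "pinv A = (THE X. penrose A X)" unfolding pinv_def penrose_def by simp
  ultimately show ?thesis by simp
qed

lemma pinv_carrier: "pinv A \<in> carrier_mat (dim_col A) (dim_row A)"
  using pinv_penrose unfolding penrose_def by blast




lemma arith3:
  fixes z k n m :: nat
  assumes h: "z + (n - k) * k \<le> n * m" and kn: "k \<le> n"
  shows "z \<le> m * k + (m - k) * (n - k)"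
proof -
  obtain b where nb: "n = k + b" using kn le_Suc_ex by blast
  show ?thesis
  proof (cases "k \<le> m")
    case True
    then obtain a where ma: "m = k + a" using le_Suc_ex by blast
    show ?thesis using h unfolding nb ma by (simp add: algebra_simps)
  next
    case False
    have e1: "(n - k) * k = b * k" using nb by simp
    have e2: "n * m = k * m + b * m" using nb by (simp add: add_mult_distrib)
    have e3: "b * m \<le> b * k" using False by simp
    have e4: "m - k = 0" using False by simp
    have "z \<le> k * m" using h e1 e2 e3 by linarith
    then show ?thesis using e4 by (simp add: mult.commute)
  qed
qed

theorem part3:
  fixes A Hp Hm :: "real mat"
  assumes ext: "extreme_pt (feasible2 A) (Hp, Hm)"
  shows "nnz (Hp - Hm) \<le> dim_row A * mrank A + (dim_row A - mrank A) * (dim_col A - mrank A)"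
proof -
  define n where "n = dim_col A"
  define m where "m = dim_row A"
  define X where "X = pinv A"
  have Ac: "A \<in> carrier_mat m n" unfolding m_def n_def by auto
  have Xc: "X \<in> carrier_mat n m" unfolding X_def n_def m_def by (rule pinv_carrier)
  have xF: "(Hp,Hm) \<in> feasible2 A" using ext unfolding extreme_pt_def by simp
  define G where "G = Hp - Hm"
  have Gc: "G \<in> carrier_mat n m" and G1: "A * G * A = A" and G2: "transpose_mat (A * G) = A * G"
    and G3: "G * A * X = G"
    using xF unfolding feasible2_def feasible1_def G_def X_def n_def m_def by auto
  have key: "transpose_mat A * (A * X) = transpose_mat A"
  proof -
    have a: "transpose_mat A = transpose_mat A * (A * G)"
    proof -
      have "transpose_mat A = transpose_mat (A * G * A)" using G1 by simp
      also have "\<dots> = transpose_mat A * transpose_mat (A * G)" using Ac Gc by (simp add: assoc' tm')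
      also have "\<dots> = transpose_mat A * (A * G)" using G2 by simp
      finally show ?thesis .
    qed
    have G3': "G * (A * X) = G" using G3 Ac Gc Xc by (simp add: assoc')
    have "transpose_mat A * (A * X) = transpose_mat A * (A * G) * (A * X)" using a by simp
    also have "\<dots> = transpose_mat A * (A * (G * (A * X)))" using Ac Gc Xc by (simp add: assoc')
    also have "\<dots> = transpose_mat A * (A * G)" using G3' by simp
    also have "\<dots> = transpose_mat A" using a by simp
    finally show ?thesis .
  qed
  obtain P w where P: "P \<subseteq> {..<n}" "card P = vec_space.rank m A"
   and indP: "\<And>c. (\<forall>i<m. (\<Sum>p\<in>P. c p * A $$ (i,p)) = 0) \<Longrightarrow> (\<forall>p\<in>P. c p = 0)"
   and kerw: "\<And>q i. q < n \<Longrightarrow> i < m \<Longrightarrow> (\<Sum>k<n. A $$ (i,k) * w q k) = 0"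
   and indw: "\<And>d. (\<forall>i<n. (\<Sum>q\<in>{..<n} - P. d q * w q i) = 0) \<Longrightarrow> \<forall>q\<in>{..<n} - P. d q = 0"
    using kernel_family[OF Ac] by blast
  define L where "L = {..<n} - P"
  define J where "J = L \<times> P"
  define M where "M x = mat n m (\<lambda>(i,l). w (fst x) i * A $$ (l, snd x))" for x
  have finP: "finite P" using P(1) finite_subset by blast
  have finJ: "finite J" unfolding J_def L_def using finP by simp
  have cardJ: "card J = (n - card P) * card P" unfolding J_def L_def using card_compl[OF P(1)] by (simp add: card_cartesian_product)
  have Mc: "M x \<in> carrier_mat n m" for x unfolding M_def by simp
  have AM: "A * M x = 0\<^sub>m m m" if "x \<in> J" for x
  proof (rule eq_matI)
    fix i l assume "i < dim_row (0\<^sub>m m m :: real mat)" "l < dim_col (0\<^sub>m m m :: real mat)"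
    then have i: "i < m" and l: "l < m" by auto
    have q: "fst x < n" using that unfolding J_def L_def by auto
    have "(A * M x) $$ (i,l) = (\<Sum>k<n. A $$ (i,k) * (w (fst x) k * A $$ (l, snd x)))"
      using Ac i l by (simp add: M_def scalar_prod_def lessThan_atLeast0)
    also have "\<dots> = (\<Sum>k<n. A $$ (i,k) * w (fst x) k) * A $$ (l, snd x)"
      by (simp add: sum_distrib_right sum_distrib_left mult_ac)
    also have "\<dots> = 0" using kerw[OF q i] by simp
    finally show "(A * M x) $$ (i,l) = 0\<^sub>m m m $$ (i,l)" using i l by simp
  qed (use Ac in \<open>simp_all add: M_def\<close>)
  have MAX: "M x * A * X = M x" if "x \<in> J" for x
  proof -
    have p: "snd x < n" using that P(1) unfolding J_def by auto
    define W where "W = mat n 1 (\<lambda>(i,_). w (fst x) i)"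
    define E where "E = mat 1 n (\<lambda>(_,k). if k = snd x then 1 else (0::real))"
    have Wc: "W \<in> carrier_mat n 1" and Ec: "E \<in> carrier_mat 1 n" unfolding W_def E_def by auto
    have Meq: "M x = W * (E * transpose_mat A)"
    proof (rule eq_matI)
      fix i l assume "i < dim_row (W * (E * transpose_mat A))" "l < dim_col (W * (E * transpose_mat A))"
      then have i: "i < n" and l: "l < m" using Wc Ec Ac by auto
      have "(E * transpose_mat A) $$ (0, l) = (\<Sum>k<n. (if k = snd x then 1 else 0) * A $$ (l,k))"
        using Ec Ac l by (simp add: E_def scalar_prod_def lessThan_atLeast0)
      also have "\<dots> = (\<Sum>k<n. (if k = snd x then A $$ (l,k) else 0))" by (rule sum.cong) auto
      also have "\<dots> = A $$ (l, snd x)" using p by simp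
      finally have e: "(E * transpose_mat A) $$ (0, l) = A $$ (l, snd x)" .
      have "(W * (E * transpose_mat A)) $$ (i,l) = W $$ (i,0) * (E * transpose_mat A) $$ (0, l)"
        using Wc Ec Ac i l by (simp add: scalar_prod_def)
      then show "M x $$ (i,l) = (W * (E * transpose_mat A)) $$ (i,l)"
        using e i l by (simp add: M_def W_def)
    qed (use Wc Ec Ac in \<open>simp_all add: M_def\<close>)
    have "M x * A * X = W * (E * (transpose_mat A * (A * X)))"
      unfolding Meq using Wc Ec Ac Xc by (simp add: assoc')
    also have "\<dots> = M x" unfolding key Meq ..
    finally show ?thesis .
  qed
  have indep: "\<forall>j\<in>J. c j = 0" if c: "\<forall>i<n. \<forall>l<m. (\<Sum>j\<in>J. c j * M j $$ (i,l)) = 0" for c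
  proof -
    have inner: "\<forall>q\<in>L. (\<Sum>p\<in>P. c (q,p) * A $$ (l,p)) = 0" if l: "l < m" for l
    proof -
      have "\<forall>i<n. (\<Sum>q\<in>L. (\<Sum>p\<in>P. c (q,p) * A $$ (l,p)) * w q i) = 0"
      proof (intro allI impI)
        fix i assume i: "i < n"
        have "(\<Sum>j\<in>J. c j * M j $$ (i,l)) = (\<Sum>q\<in>L. \<Sum>p\<in>P. c (q,p) * M (q,p) $$ (i,l))"
          unfolding J_def by (simp add: sum.cartesian_product split_def)
        also have "\<dots> = (\<Sum>q\<in>L. \<Sum>p\<in>P. c (q,p) * (w q i * A $$ (l,p)))"
          using i l by (simp add: M_def)
        also have "\<dots> = (\<Sum>q\<in>L. (\<Sum>p\<in>P. c (q,p) * A $$ (l,p)) * w q i)"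
          by (simp add: sum_distrib_right sum_distrib_left mult_ac)
        finally show "(\<Sum>q\<in>L. (\<Sum>p\<in>P. c (q,p) * A $$ (l,p)) * w q i) = 0" using c i l by simp
      qed
      then show ?thesis using indw[of "\<lambda>q. (\<Sum>p\<in>P. c (q,p) * A $$ (l,p))"] unfolding L_def by blast
    qed
    show ?thesis
    proof
      fix x assume x: "x \<in> J"
      obtain q p where xqp: "x = (q,p)" "q \<in> L" "p \<in> P" using x unfolding J_def by auto
      have "\<forall>l<m. (\<Sum>p\<in>P. c (q,p) * A $$ (l,p)) = 0" using inner xqp(2) by blast
      then have "\<forall>p\<in>P. c (q,p) = 0" by (rule indP)
      then show "c x = 0" using xqp by simp
    qed
  qed
  have closed: "y \<in> feasible2 A" if y: "y \<in> feasible1 A"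
      and yd: "fst y - snd y = (Hp - Hm) + e \<cdot>\<^sub>m lcomb_mat c M J (dim_col A) (dim_row A)" for c y e
  proof -
    define D where "D = lcomb_mat c M J n m"
    have Dc: "D \<in> carrier_mat n m" unfolding D_def by simp
    have DAX: "D * A * X = D"
    proof -
      have "D * A = lcomb_mat c (\<lambda>j. M j * A) J n n"
        unfolding D_def by (rule mult_lcomb_right[OF Ac]) (rule Mc)
      then have "D * A * X = lcomb_mat c (\<lambda>j. M j * A) J n n * X" by simp
      also have "\<dots> = lcomb_mat c (\<lambda>j. M j * A * X) J n m"
      proof (rule mult_lcomb_right[OF Xc])
        fix j show "M j * A \<in> carrier_mat n n" using Mc[of j] Ac by simp
      qed
      also have "\<dots> = D" unfolding D_def by (rule lcomb_cong) (use Mc Ac Xc MAX in auto)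
      finally show ?thesis .
    qed
    have "(G + e \<cdot>\<^sub>m D) * A * X = G * A * X + e \<cdot>\<^sub>m (D * A * X)"
    proof -
      have "(G + e \<cdot>\<^sub>m D) * A = G * A + e \<cdot>\<^sub>m (D * A)"
        using Gc Dc Ac by (simp add: add_mult_distrib_mat[of _ n m] mult_smult_assoc_mat[of _ n m])
      moreover have "(G * A + e \<cdot>\<^sub>m (D * A)) * X = G * A * X + e \<cdot>\<^sub>m (D * A * X)"
        using Gc Dc Ac Xc by (simp add: add_mult_distrib_mat[of _ n n] mult_smult_assoc_mat[of _ n n])
      ultimately show ?thesis by simp
    qed
    also have "\<dots> = G + e \<cdot>\<^sub>m D" using G3 DAX by simp
    finally have "(G + e \<cdot>\<^sub>m D) * A * pinv A = G + e \<cdot>\<^sub>m D" unfolding X_def .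
    then show ?thesis using y yd unfolding feasible2_def D_def G_def n_def m_def by (cases y) auto
  qed
  have F21: "feasible2 A \<subseteq> feasible1 A" unfolding feasible2_def by auto
  have "nnz (Hp - Hm) + card J \<le> dim_col A * dim_row A"
  proof (rule generic_bound[OF ext F21 finJ])
    show "\<And>j. j \<in> J \<Longrightarrow> M j \<in> carrier_mat (dim_col A) (dim_row A)" using Mc unfolding n_def m_def by blast
    show "\<And>j. j \<in> J \<Longrightarrow> A * M j = 0\<^sub>m (dim_row A) (dim_row A)" using AM unfolding m_def by blast
    show "\<And>c. (\<forall>i<dim_col A. \<forall>l<dim_row A. (\<Sum>j\<in>J. c j * M j $$ (i,l)) = 0) \<Longrightarrow> \<forall>j\<in>J. c j = 0"
      using indep unfolding n_def m_def by blast
    show "\<And>c y e. y \<in> feasible1 A \<Longrightarrow> fst y - snd y = Hp - Hm + e \<cdot>\<^sub>m lcomb_mat c M J (dim_col A) (dim_row A) \<Longrightarrow> y \<in> feasible2 A"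
      by (rule closed)
  qed
  then have h: "nnz (Hp - Hm) + (n - card P) * card P \<le> n * m" using cardJ unfolding n_def m_def by simp
  have "card P \<le> n" using card_mono[OF finite_lessThan P(1)] by simp
  from arith3[OF h this] show ?thesis using P(2) unfolding mrank_def m_def n_def by simp
qed




lemma sym_sq_zero:
  fixes P :: "real mat"
  assumes P: "P \<in> carrier_mat m m" and s: "transpose_mat P = P" and z: "P * P = 0\<^sub>m m m"
  shows "P = 0\<^sub>m m m"
proof (rule eq_matI)
  fix i k assume "i < dim_row (0\<^sub>m m m :: real mat)" "k < dim_col (0\<^sub>m m m :: real mat)"
  then have i: "i < m" and k: "k < m" by auto
  have "(P * P) $$ (i,i) = (\<Sum>l<m. P $$ (i,l) * P $$ (l,i))" using P i by (simp add: scalar_prod_def lessThan_atLeast0)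
  also have "\<dots> = (\<Sum>l<m. P $$ (i,l) * P $$ (i,l))"
  proof (rule sum.cong[OF refl])
    fix l assume "l \<in> {..<m}"
    then have "P $$ (l,i) = transpose_mat P $$ (i,l)" using P i by simp
    then show "P $$ (i,l) * P $$ (l,i) = P $$ (i,l) * P $$ (i,l)" using s by simp
  qed
  finally have "(\<Sum>l<m. P $$ (i,l) * P $$ (i,l)) = 0" using z i by simp
  then have "\<forall>l\<in>{..<m}. P $$ (i,l) * P $$ (i,l) = 0" by (subst sum_nonneg_eq_0_iff[symmetric]) auto
  then show "P $$ (i,k) = 0\<^sub>m m m $$ (i,k)" using i k by auto
qed (use P in auto)

lemma extreme_from_unique:
  fixes A Hp Hm :: "real mat"
  assumes F: "(Hp,Hm) \<in> feasible1 A"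
  and disj: "\<And>i j. i < dim_col A \<Longrightarrow> j < dim_row A \<Longrightarrow> Hp $$ (i,j) = 0 \<or> Hm $$ (i,j) = 0"
  and uniq: "\<And>D. D \<in> carrier_mat (dim_col A) (dim_row A) \<Longrightarrow>
      (\<And>i j. i < dim_col A \<Longrightarrow> j < dim_row A \<Longrightarrow> Hp $$ (i,j) = 0 \<Longrightarrow> Hm $$ (i,j) = 0 \<Longrightarrow> D $$ (i,j) = 0) \<Longrightarrow>
      A * D * A = 0\<^sub>m (dim_row A) (dim_col A) \<Longrightarrow> transpose_mat (A * D) = A * D \<Longrightarrow> D = 0\<^sub>m (dim_col A) (dim_row A)"
  shows "extreme_pt (feasible1 A) (Hp,Hm)"
  unfolding extreme_pt_def
proof (intro conjI F ballI allI impI)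
  define n where "n = dim_col A"
  define m where "m = dim_row A"
  have Ac: "A \<in> carrier_mat m n" unfolding m_def n_def by auto
  fix y z t assume y: "y \<in> feasible1 A" and z: "z \<in> feasible1 A"
    and t: "0 < t \<and> t < 1 \<and> fst (Hp, Hm) = t \<cdot>\<^sub>m fst y + (1 - t) \<cdot>\<^sub>m fst z \<and> snd (Hp, Hm) = t \<cdot>\<^sub>m snd y + (1 - t) \<cdot>\<^sub>m snd z"
  obtain y1 y2 where yy: "y = (y1,y2)" by (cases y)
  obtain z1 z2 where zz: "z = (z1,z2)" by (cases z)
  have y1: "y1 \<in> carrier_mat n m" and y2: "y2 \<in> carrier_mat n m" and ya: "A * (y1 - y2) * A = A"
    and ys: "transpose_mat (A * (y1 - y2)) = A * (y1 - y2)" and yn1: "nonneg_mat y1" and yn2: "nonneg_mat y2"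
    using y unfolding yy feasible1_def n_def m_def by auto
  have z1: "z1 \<in> carrier_mat n m" and z2: "z2 \<in> carrier_mat n m" and za: "A * (z1 - z2) * A = A"
    and zs: "transpose_mat (A * (z1 - z2)) = A * (z1 - z2)" and zn1: "nonneg_mat z1" and zn2: "nonneg_mat z2"
    using z unfolding zz feasible1_def n_def m_def by auto
  have t0: "0 < t" "t < 1" and hp: "Hp = t \<cdot>\<^sub>m y1 + (1 - t) \<cdot>\<^sub>m z1" and hm: "Hm = t \<cdot>\<^sub>m y2 + (1 - t) \<cdot>\<^sub>m z2"
    using t unfolding yy zz by auto
  have zero_prop: "a = 0 \<and> b = 0" if "t * a + (1 - t) * b = 0" "a \<ge> 0" "b \<ge> 0" for a b :: real
  proof -
    have "t * a \<ge> 0" "(1 - t) * b \<ge> 0" using that t0 by auto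
    then have "t * a = 0" "(1 - t) * b = 0" using that(1) by linarith+
    then show ?thesis using t0 by auto
  qed
  have p0: "y1 $$ (i,j) = 0 \<and> z1 $$ (i,j) = 0" if "i < n" "j < m" "Hp $$ (i,j) = 0" for i j
  proof -
    have "t * y1 $$ (i,j) + (1 - t) * z1 $$ (i,j) = 0" using that hp y1 z1 by simp
    moreover have "y1 $$ (i,j) \<ge> 0" "z1 $$ (i,j) \<ge> 0" using yn1 zn1 y1 z1 that unfolding nonneg_mat_def by auto
    ultimately show ?thesis using zero_prop by blast
  qed
  have m0: "y2 $$ (i,j) = 0 \<and> z2 $$ (i,j) = 0" if "i < n" "j < m" "Hm $$ (i,j) = 0" for i j
  proof -
    have "t * y2 $$ (i,j) + (1 - t) * z2 $$ (i,j) = 0" using that hm y2 z2 by simp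
    moreover have "y2 $$ (i,j) \<ge> 0" "z2 $$ (i,j) \<ge> 0" using yn2 zn2 y2 z2 that unfolding nonneg_mat_def by auto
    ultimately show ?thesis using zero_prop by blast
  qed
  define D where "D = (y1 - y2) - (z1 - z2)"
  have Dc: "D \<in> carrier_mat n m" unfolding D_def using y1 y2 z1 z2 by (simp add: minus_carrier_mat)
  have Y: "y1 - y2 \<in> carrier_mat n m" and Z: "z1 - z2 \<in> carrier_mat n m" using y1 y2 z1 z2 by (simp_all add: minus_carrier_mat)
  have AD: "A * D = A * (y1 - y2) - A * (z1 - z2)" unfolding D_def by (rule mult_minus_distrib_mat[OF Ac Y Z])
  have ADA: "A * D * A = 0\<^sub>m m n"
  proof -
    have "A * D * A = A * (y1 - y2) * A - A * (z1 - z2) * A"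
      unfolding AD by (rule minus_mult_distrib_mat[of _ m m]) (use Ac Y Z in simp_all)
    also have "\<dots> = 0\<^sub>m m n" unfolding ya za using Ac by simp
    finally show ?thesis .
  qed
  have ADs: "transpose_mat (A * D) = A * D"
    unfolding AD using Ac Y Z ys zs by (simp add: transpose_minus[of _ m m])
  have supp: "D $$ (i,j) = 0" if "i < n" "j < m" "Hp $$ (i,j) = 0" "Hm $$ (i,j) = 0" for i j
    using p0[OF that(1,2,3)] m0[OF that(1,2,4)] that(1,2) y1 y2 z1 z2 unfolding D_def by simp
  have D0: "D = 0\<^sub>m n m"
    unfolding n_def m_def
    by (rule uniq) (use Dc ADA ADs supp in \<open>simp_all add: n_def m_def\<close>)
  have eqd: "y1 $$ (i,j) - y2 $$ (i,j) = z1 $$ (i,j) - z2 $$ (i,j)" if "i < n" "j < m" for i j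
  proof -
    have "D $$ (i,j) = 0" using D0 that by simp
    then show ?thesis unfolding D_def using that y1 y2 z1 z2 by simp
  qed
  have e1: "y1 = z1"
  proof (rule eq_matI)
    fix i j assume "i < dim_row z1" "j < dim_col z1"
    then have ij: "i < n" "j < m" using z1 by auto
    show "y1 $$ (i,j) = z1 $$ (i,j)"
    proof (cases "Hp $$ (i,j) = 0")
      case True then show ?thesis using p0[OF ij] by simp
    next
      case False
      then have "Hm $$ (i,j) = 0" using disj ij unfolding n_def m_def by blast
      then show ?thesis using m0[OF ij] eqd[OF ij] by simp
    qed
  qed (use y1 z1 in auto)
  have e2: "y2 = z2"
  proof (rule eq_matI)
    fix i j assume "i < dim_row z2" "j < dim_col z2"
    then have ij: "i < n" "j < m" using z2 by auto
    show "y2 $$ (i,j) = z2 $$ (i,j)"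
    proof (cases "Hm $$ (i,j) = 0")
      case True then show ?thesis using m0[OF ij] by simp
    next
      case False
      then have "Hp $$ (i,j) = 0" using disj ij unfolding n_def m_def by blast
      then show ?thesis using p0[OF ij] eqd[OF ij] by simp
    qed
  qed (use y2 z2 in auto)
  show "y = z" unfolding yy zz using e1 e2 by simp
qed




lemma sum_if_lt: "(r::nat) \<le> m \<Longrightarrow> (\<Sum>j<m. (if j < r then a else b)) = real r * a + real (m - r) * (b::real)"
proof -
  assume rm: "r \<le> m"
  have "(\<Sum>j<m. (if j < r then a else b)) = (\<Sum>j\<in>{..<m} \<inter> {j. j < r}. a) + (\<Sum>j\<in>{..<m} \<inter> - {j. j < r}. b)"
    by (rule sum.If_cases) simp
  also have "{..<m} \<inter> {j. j < r} = {..<r}" using rm by auto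
  also have "{..<m} \<inter> - {j. j < r} = {r..<m}" by auto
  finally show ?thesis by simp
qed

lemma sum_ind: "(k::nat) < m \<Longrightarrow> (\<Sum>j<m. (if j = k then (c::real) else 0)) = c"
  using sum.delta[of "{..<m}" k "\<lambda>_. c"] by simp

lemma sum_delta2: "(k::nat) < m \<Longrightarrow> (\<Sum>j<m. (if j = k \<and> j = l then 1 else (0::real))) = (if k = l then 1 else 0)"
  by (cases "k = l") (simp_all add: sum_ind)

context
  fixes m n r :: nat
  assumes rn: "r \<le> n" and nm: "n \<le> m" and r1: "1 \<le> r"
begin

definition "den = 1 + (real m + 2) * real r"
definition "gg j = (if j < r then - (real m + 1) else 1) / den"
definition "UU = mat m r (\<lambda>(i,k). (if i = k then 1 else 0) + (1::real))"
definition "HT = mat r m (\<lambda>(k,j). (if j = k then 1 else 0) + gg j)"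

lemma den_pos: "den > 0" unfolding den_def by (simp add: add_pos_nonneg)

lemma HT_UU: "HT * UU = 1\<^sub>m r"
proof (rule eq_matI)
  fix k l assume "k < dim_row (1\<^sub>m r :: real mat)" "l < dim_col (1\<^sub>m r :: real mat)"
  then have k: "k < r" and l: "l < r" by auto
  have km: "k < m" "l < m" using k l rn nm by auto
  have "(HT * UU) $$ (k,l) = (\<Sum>j<m. ((if j = k then 1 else 0) + gg j) * ((if j = l then 1 else 0) + 1))"
    using k l by (simp add: HT_def UU_def scalar_prod_def lessThan_atLeast0)
  also have "\<dots> = (\<Sum>j<m. (if j = k \<and> j = l then 1 else 0) + (if j = k then 1 else 0) + (if j = l then gg j else 0) + gg j)"
    by (rule sum.cong[OF refl]) simp
  also have "\<dots> = (\<Sum>j<m. (if j = k \<and> j = l then 1 else 0)) + (\<Sum>j<m. (if j = k then 1 else 0)) + (\<Sum>j<m. (if j = l then gg j else 0)) + (\<Sum>j<m. gg j)"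
    by (simp add: sum.distrib)
  also have "(\<Sum>j<m. (if j = k \<and> j = l then 1 else (0::real))) = (if k = l then 1 else 0)" by (rule sum_delta2[OF km(1)])
  also have "(\<Sum>j<m. (if j = k then 1 else (0::real))) = 1" using km by (simp add: sum_ind)
  also have "(\<Sum>j<m. (if j = l then gg j else 0)) = gg l" using km by simp
  also have "(\<Sum>j<m. gg j) = (real r * (- (real m + 1)) + real (m - r)) / den"
    unfolding gg_def sum_divide_distrib[symmetric] using sum_if_lt[of r m] rn nm by simp
  finally have e: "(HT * UU) $$ (k,l) = (if k = l then 1 else 0) + 1 + gg l + (real r * (- (real m + 1)) + real (m - r)) / den" by simp
  have "1 + gg l + (real r * (- (real m + 1)) + real (m - r)) / den = 0"
    using l den_pos rn nm unfolding gg_def by (simp add: field_simps of_nat_diff den_def)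
  then show "(HT * UU) $$ (k,l) = 1\<^sub>m r $$ (k,l)" using e k l by simp
qed (simp_all add: HT_def UU_def)

lemma UU_HT_entry:
  assumes i: "i < m" and j: "j < m"
  shows "(UU * HT) $$ (i,j) = (if i = j \<and> i < r then 1 else 0) + (if i < r then gg j else 0) + (if j < r then 1 else 0) + real r * gg j"
proof -
  have "(UU * HT) $$ (i,j) = (\<Sum>k<r. ((if i = k then 1 else 0) + 1) * ((if j = k then 1 else 0) + gg j))"
    using i j by (simp add: HT_def UU_def scalar_prod_def lessThan_atLeast0)
  also have "\<dots> = (\<Sum>k<r. (if k = i \<and> k = j then 1 else 0) + (if k = i then gg j else 0) + (if k = j then 1 else 0) + gg j)"
    by (rule sum.cong[OF refl]) auto
  also have "\<dots> = (\<Sum>k<r. (if k = i \<and> k = j then 1 else 0)) + (\<Sum>k<r. (if k = i then gg j else 0)) + (\<Sum>k<r. (if k = j then 1 else 0)) + (\<Sum>k<r. gg j)"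
    by (simp add: sum.distrib)
  also have "(\<Sum>k<r. (if k = i \<and> k = j then 1 else (0::real))) = (if i = j \<and> i < r then 1 else 0)"
    by (cases "i = j") (simp_all add: sum.delta)
  finally show ?thesis by (simp add: sum.delta)
qed

lemma UU_HT_sym: "transpose_mat (UU * HT) = UU * HT"
proof (rule eq_matI)
  fix i j assume "i < dim_row (UU * HT)" "j < dim_col (UU * HT)"
  then have i: "i < m" and j: "j < m" by (auto simp: UU_def HT_def)
  have "(UU * HT) $$ (j,i) = (UU * HT) $$ (i,j)"
    unfolding UU_HT_entry[OF i j] UU_HT_entry[OF j i] using den_pos
    by (cases "i < r"; cases "j < r") (auto simp: gg_def field_simps den_def)
  then show "transpose_mat (UU * HT) $$ (i,j) = (UU * HT) $$ (i,j)" using i j by (simp add: UU_def HT_def)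
qed (simp_all add: UU_def HT_def)


definition "cc j = (if j < r then j else (0::nat))"
definition "EE = mat r n (\<lambda>(k,j). if k = cc j then 1 else (0::real))"
definition "FF = mat n r (\<lambda>(k,l). if k = l then 1 else (0::real))"
definition "AA = UU * EE"
definition "HH = FF * HT"

lemma carriers: "UU \<in> carrier_mat m r" "HT \<in> carrier_mat r m" "EE \<in> carrier_mat r n" "FF \<in> carrier_mat n r"
  "AA \<in> carrier_mat m n" "HH \<in> carrier_mat n m"
  unfolding UU_def HT_def EE_def FF_def AA_def HH_def by auto

lemma cc_lt: "j < n \<Longrightarrow> cc j < r" using r1 unfolding cc_def by auto

lemma EE_FF: "EE * FF = 1\<^sub>m r"
proof (rule eq_matI)
  fix k l assume "k < dim_row (1\<^sub>m r :: real mat)" "l < dim_col (1\<^sub>m r :: real mat)"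
  then have k: "k < r" and l: "l < r" by auto
  have ln: "l < n" using l rn by simp
  have "(EE * FF) $$ (k,l) = (\<Sum>j<n. (if k = cc j then 1 else 0) * (if j = l then 1 else 0))"
    using k l ln by (simp add: EE_def FF_def scalar_prod_def lessThan_atLeast0)
  also have "\<dots> = (\<Sum>j<n. (if j = l then (if k = l then 1 else 0) else 0))"
    by (rule sum.cong[OF refl]) (use l in \<open>auto simp: cc_def\<close>)
  also have "\<dots> = (if k = l then 1 else 0)" using ln by (simp add: sum_ind)
  finally show "(EE * FF) $$ (k,l) = 1\<^sub>m r $$ (k,l)" using k l by simp
qed (simp_all add: EE_def FF_def)

lemma AA_entry: "i < m \<Longrightarrow> j < n \<Longrightarrow> AA $$ (i,j) = UU $$ (i, cc j)"
proof -
  assume i: "i < m" and j: "j < n"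
  have "AA $$ (i,j) = (\<Sum>k<r. UU $$ (i,k) * (if k = cc j then 1 else 0))"
    using i j carriers by (simp add: AA_def EE_def scalar_prod_def lessThan_atLeast0)
  also have "\<dots> = (\<Sum>k<r. if k = cc j then UU $$ (i,k) else 0)" by (rule sum.cong) auto
  also have "\<dots> = UU $$ (i, cc j)" using cc_lt[OF j] by (simp add: sum_ind)
  finally show ?thesis .
qed

lemma HH_entry: "i < n \<Longrightarrow> j < m \<Longrightarrow> HH $$ (i,j) = (if i < r then HT $$ (i,j) else 0)"
proof -
  assume i: "i < n" and j: "j < m"
  have "HH $$ (i,j) = (\<Sum>k<r. (if i = k then 1 else 0) * HT $$ (k,j))"
    using i j carriers by (simp add: HH_def FF_def scalar_prod_def lessThan_atLeast0)
  also have "\<dots> = (\<Sum>k<r. if k = i then HT $$ (i,j) else 0)" by (rule sum.cong) auto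
  also have "\<dots> = (if i < r then HT $$ (i,j) else 0)" by (simp add: sum_ind)
  finally show ?thesis .
qed

lemma AH: "AA * HH = UU * HT"
proof -
  have r1: "EE * (FF * Z) = Z" if "dim_row Z = r" for Z :: "real mat"
  proof -
    have "EE * (FF * Z) = (EE * FF) * Z" using carriers that by (simp add: assoc')
    then show ?thesis using EE_FF that by simp
  qed
  show ?thesis unfolding AA_def HH_def using carriers by (simp add: assoc' r1)
qed

lemma HTU': "HT * (UU * Z) = Z" if "dim_row Z = r" for Z :: "real mat"
proof -
  have "HT * (UU * Z) = (HT * UU) * Z" using carriers that by (simp add: assoc')
  then show ?thesis using HT_UU that by simp
qed

lemma AHA: "AA * HH * AA = AA"
  unfolding AH unfolding AA_def using carriers by (simp add: assoc' HTU')

lemma AH_sym: "transpose_mat (AA * HH) = AA * HH"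
  unfolding AH by (rule UU_HT_sym)

definition "HP = mat n m (\<lambda>ij. max (HH $$ ij) 0)"
definition "HM = mat n m (\<lambda>ij. max (- HH $$ ij) 0)"

lemma HP_HM: "HP - HM = HH"
  using carriers by (intro eq_matI) (auto simp: HP_def HM_def)

lemma feas: "(HP, HM) \<in> feasible1 AA"
  using carriers AHA AH_sym HP_HM unfolding feasible1_def nonneg_mat_def
  by (auto simp: HP_def HM_def)

lemma UU_distinct: "distinct (cols UU)"
proof -
  have "col UU k \<noteq> col UU k'" if "k < r" "k' < r" "k \<noteq> k'" for k k'
  proof
    assume "col UU k = col UU k'"
    then have "col UU k $ k = col UU k' $ k" by simp
    then show False using that rn nm carriers by (simp add: UU_def)
  qed
  then show ?thesis using carriers by (auto simp: distinct_conv_nth cols_length)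
qed

lemma rank_UU: "vec_space.rank m UU = r"
proof -
  interpret vec_space "TYPE(real)" m .
  have "lin_indpt (set (cols UU))"
  proof
    assume "lin_dep (set (cols UU))"
    then obtain v where v: "v \<in> carrier_vec r" "v \<noteq> 0\<^sub>v r" "UU *\<^sub>v v = 0\<^sub>v m"
      using lin_depE[OF carriers(1) _ UU_distinct] by blast
    have "v = (HT * UU) *\<^sub>v v" using HT_UU v by simp
    also have "\<dots> = HT *\<^sub>v (UU *\<^sub>v v)" using carriers v by simp
    also have "\<dots> = HT *\<^sub>v 0\<^sub>v m" using v by simp
    also have "\<dots> = 0\<^sub>v r" using carriers by (intro eq_vecI) (auto simp: scalar_prod_def)
    finally show False using v(2) by simp
  qed
  then show ?thesis using lin_indpt_full_rank[OF carriers(1) UU_distinct] by simp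
qed

lemma rank_AA: "mrank AA = r"
proof -
  have "set (cols AA) = set (cols UU)"
  proof -
    have colA: "col AA j = col UU (cc j)" if "j < n" for j
      using that carriers cc_lt[OF that] by (intro eq_vecI) (simp_all add: AA_entry)
    have "set (cols AA) = (\<lambda>j. col AA j) ` {..<n}" using carriers by (auto simp: cols_def)
    also have "\<dots> = (\<lambda>j. col UU (cc j)) ` {..<n}" using colA by auto
    also have "\<dots> = col UU ` (cc ` {..<n})" by auto
    also have "cc ` {..<n} = {..<r}"
    proof
      show "cc ` {..<n} \<subseteq> {..<r}" using cc_lt by auto
      show "{..<r} \<subseteq> cc ` {..<n}"
      proof
        fix k assume "k \<in> {..<r}"
        then have "k = cc k" "k < n" using rn unfolding cc_def by auto
        then show "k \<in> cc ` {..<n}" by blast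
      qed
    qed
    also have "col UU ` {..<r} = set (cols UU)" using carriers by (auto simp: cols_def)
    finally show ?thesis .
  qed
  then show ?thesis using rank_UU carriers unfolding mrank_def vec_space.rank_def by simp
qed

lemma HT_nz: "k < r \<Longrightarrow> j < m \<Longrightarrow> HT $$ (k,j) \<noteq> 0"
proof -
  assume k: "k < r" and j: "j < m"
  have d: "den > 0" by (rule den_pos)
  have e: "HT $$ (k,j) = (if j = k then 1 else 0) + gg j" using k j by (simp add: HT_def)
  show ?thesis
  proof (cases "j < r")
    case True
    show ?thesis
    proof (cases "j = k")
      case True
      have "1 + (- (real m + 1)) / den \<noteq> 0"
      proof
        assume "1 + (- (real m + 1)) / den = 0"
        then have "den = real m + 1" using d by (simp add: field_simps)
        moreover have "(real m + 2) * real r \<ge> (real m + 2) * 1"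
          using r1 by (intro mult_left_mono) auto
        ultimately show False unfolding den_def by simp
      qed
      then show ?thesis using e True \<open>j < r\<close> by (simp add: gg_def)
    next
      case False
      then show ?thesis using e \<open>j < r\<close> d by (simp add: gg_def)
    qed
  next
    case False
    then have "j \<noteq> k" using k by auto
    then show ?thesis using e False d by (simp add: gg_def)
  qed
qed

lemma nnz_HH: "nnz (HP - HM) = m * r"
proof -
  have "{(i, j). i < dim_row HH \<and> j < dim_col HH \<and> HH $$ (i, j) \<noteq> 0} = {..<r} \<times> {..<m}"
    using carriers rn HT_nz by (auto simp: HH_entry split: if_splits)
  then show ?thesis unfolding HP_HM nnz_def by simp
qed

lemma extreme: "extreme_pt (feasible1 AA) (HP, HM)"
proof (rule extreme_from_unique[OF feas])
  fix i j assume "i < dim_col AA" "j < dim_row AA"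
  show "HP $$ (i,j) = 0 \<or> HM $$ (i,j) = 0" using carriers \<open>i < dim_col AA\<close> \<open>j < dim_row AA\<close>
    by (simp add: HP_def HM_def max_def)
next
  fix D :: "real mat"
  assume Dc0: "D \<in> carrier_mat (dim_col AA) (dim_row AA)"
    and supp0: "\<And>i j. i < dim_col AA \<Longrightarrow> j < dim_row AA \<Longrightarrow> HP $$ (i,j) = 0 \<Longrightarrow> HM $$ (i,j) = 0 \<Longrightarrow> D $$ (i,j) = 0"
    and ADA: "AA * D * AA = 0\<^sub>m (dim_row AA) (dim_col AA)" and ADs: "transpose_mat (AA * D) = AA * D"
  have Dc: "D \<in> carrier_mat n m" using Dc0 carriers by simp
  have supp: "D $$ (i,j) = 0" if "i < n" "j < m" "r \<le> i" for i j
  proof -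
    have "HH $$ (i,j) = 0" using that by (simp add: HH_entry)
    then show ?thesis using supp0[of i j] that carriers by (simp add: HP_def HM_def)
  qed
  define P where "P = AA * D"
  have Pc: "P \<in> carrier_mat m m" unfolding P_def using carriers Dc by simp
  have "P * P = (AA * D * AA) * D" unfolding P_def using carriers Dc by (simp add: assoc')
  also have "\<dots> = 0\<^sub>m m m" using ADA carriers Dc by simp
  finally have P0: "P = 0\<^sub>m m m" using sym_sq_zero[OF Pc] ADs unfolding P_def by simp
  have ED: "EE * D = mat r m (\<lambda>(k,j). D $$ (k,j))"
  proof (rule eq_matI)
    fix k j assume "k < dim_row (mat r m (\<lambda>(k,j). D $$ (k,j)))" "j < dim_col (mat r m (\<lambda>(k,j). D $$ (k,j)))"
    then have k: "k < r" and j: "j < m" by auto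
    have "(EE * D) $$ (k,j) = (\<Sum>l<n. (if k = cc l then 1 else 0) * D $$ (l,j))"
      using k j Dc by (simp add: EE_def scalar_prod_def lessThan_atLeast0)
    also have "\<dots> = (\<Sum>l<n. if l = k then D $$ (k,j) else 0)"
    proof (rule sum.cong[OF refl])
      fix l assume l: "l \<in> {..<n}"
      show "(if k = cc l then 1 else 0) * D $$ (l,j) = (if l = k then D $$ (k,j) else 0)"
      proof (cases "l < r")
        case True then show ?thesis by (auto simp: cc_def)
      next
        case False then show ?thesis using supp[of l j] l j k by auto
      qed
    qed
    also have "\<dots> = D $$ (k,j)" using k rn by (simp add: sum_ind)
    finally show "(EE * D) $$ (k,j) = mat r m (\<lambda>(k,j). D $$ (k,j)) $$ (k,j)" using k j by simp
  qed (use carriers Dc in auto)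
  have FED: "FF * (EE * D) = D"
  proof (rule eq_matI)
    fix i j assume "i < dim_row D" "j < dim_col D"
    then have i: "i < n" and j: "j < m" using Dc by auto
    have "(FF * (EE * D)) $$ (i,j) = (\<Sum>k<r. (if i = k then 1 else 0) * D $$ (k,j))"
      using i j Dc unfolding ED by (simp add: FF_def scalar_prod_def lessThan_atLeast0)
    also have "\<dots> = (\<Sum>k<r. if k = i then D $$ (i,j) else 0)" by (rule sum.cong) auto
    also have "\<dots> = D $$ (i,j)" using supp[of i j] i j by (cases "i < r") (simp_all add: sum_ind)
    finally show "(FF * (EE * D)) $$ (i,j) = D $$ (i,j)" .
  qed (use carriers Dc in auto)
  have "D = FF * (HT * (UU * (EE * D)))" using FED carriers Dc by (simp add: HTU')
  also have "\<dots> = HH * (AA * D)" unfolding HH_def AA_def using carriers Dc by (simp add: assoc')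
  also have "\<dots> = 0\<^sub>m n m" using P0 carriers unfolding P_def by simp
  finally show "D = 0\<^sub>m (dim_col AA) (dim_row AA)" using carriers by simp
qed

lemma example: "\<exists>(A::real mat) Hp Hm. A \<in> carrier_mat m n \<and> mrank A = r \<and>
   extreme_pt (feasible1 A) (Hp, Hm) \<and> nnz (Hp - Hm) = m * r"
  using carriers(5) rank_AA extreme nnz_HH by blast

end

theorem proposition3p1:
  shows "(\<forall>(A::real mat) Hp Hm. extreme_pt (feasible1 A) (Hp, Hm) \<longrightarrow>
            nnz (Hp - Hm) \<le> dim_row A * mrank A)
       \<and> (\<forall>m n r. m \<ge> n \<and> n \<ge> r \<and> r \<ge> 1 \<longrightarrow>
            (\<exists>(A::real mat) Hp Hm. A \<in> carrier_mat m n \<and> mrank A = r \<and>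
               extreme_pt (feasible1 A) (Hp, Hm) \<and> nnz (Hp - Hm) = m * r))
       \<and> (\<forall>(A::real mat) Hp Hm. extreme_pt (feasible2 A) (Hp, Hm) \<longrightarrow>
            nnz (Hp - Hm) \<le> dim_row A * mrank A
                 + (dim_row A - mrank A) * (dim_col A - mrank A))"
proof (intro conjI allI impI)
  fix A :: "real mat" and Hp Hm
  assume "extreme_pt (feasible1 A) (Hp, Hm)"
  then show "nnz (Hp - Hm) \<le> dim_row A * mrank A" by (rule part1)
next
  fix m n r :: nat
  assume "n \<le> m \<and> r \<le> n \<and> 1 \<le> r"
  then show "\<exists>(A::real mat) Hp Hm. A \<in> carrier_mat m n \<and> mrank A = r \<and>
               extreme_pt (feasible1 A) (Hp, Hm) \<and> nnz (Hp - Hm) = m * r"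
    by (intro example) auto
next
  fix A :: "real mat" and Hp Hm
  assume "extreme_pt (feasible2 A) (Hp, Hm)"
  then show "nnz (Hp - Hm) \<le> dim_row A * mrank A + (dim_row A - mrank A) * (dim_col A - mrank A)"
    by (rule part3)
qed

end
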